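(* Let $h>0$, $k\in\{0,1,2,\dots\}$, $\alpha\in(0,1]$, $c>0$, and let $F:\mathbb R\to\mathbb R$ be a non-zero $2\pi$-periodic function whose $k$th derivative exists and is Hölder continuous of order $\alpha$ with coefficient $c$ (i.e. $|F^{(k)}(x)-F^{(k)}(x')|\le c|x-x'|^\alpha$). Set $s:=k+\alpha$. Then for all sufficiently small $\epsilon>0$, $$\log\mathcal A^{A_h}_\epsilon(F)\le Ch\left(\frac{12c}\epsilon\right)^{1/s},$$ where $C$ is a universal constant.
   Context: For $h>0$, $A_h$ is the space of real-valued $2\pi$-periodic functions on $\mathbb R$ admitting a bounded analytic continuation to $\{z\in\mathbb C:|\operatorname{Im}z|\le h\}$, normed by the supremum of the absolute value of the continuation on that strip. Approachability: $\mathcal A^{A_h}_\epsilon(F):=\inf\{\|F^*\|_{A_h}:F^*\in A_h,\ \sup_{x\in\mathbb R}|F(x)-F^*(x)|\le\epsilon\}$. $\log=\log_2$. *)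

theory Defs
  imports "HOL-Complex_Analysis.Complex_Analysis"
begin

definition strip :: "real \<Rightarrow> complex set" where
  "strip h = {z. \<bar>Im z\<bar> \<le> h}"

definition periodic_2pi :: "(real \<Rightarrow> real) \<Rightarrow> bool" where
  "periodic_2pi F \<longleftrightarrow> (\<forall>x. F (x + 2 * pi) = F x)"

definition is_strip_continuation :: "real \<Rightarrow> (real \<Rightarrow> real) \<Rightarrow> (complex \<Rightarrow> complex) \<Rightarrow> bool" where
  "is_strip_continuation h F G \<longleftrightarrow>
     G analytic_on strip h \<and> bounded (G ` strip h) \<and> (\<forall>x. G (complex_of_real x) = complex_of_real (F x))"

definition in_A :: "real \<Rightarrow> (real \<Rightarrow> real) \<Rightarrow> bool" where
  "in_A h F \<longleftrightarrow> periodic_2pi F \<and> (\<exists>G. is_strip_continuation h F G)"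

text \<open>The norm of A_h: sup of the modulus of the (unique) continuation on the strip.\<close>
definition A_norm :: "real \<Rightarrow> (real \<Rightarrow> real) \<Rightarrow> real" where
  "A_norm h F = Inf {Sup ((\<lambda>z. norm (G z)) ` strip h) | G. is_strip_continuation h F G}"

definition approachability :: "real \<Rightarrow> real \<Rightarrow> (real \<Rightarrow> real) \<Rightarrow> real" where
  "approachability h \<epsilon> F =
     Inf {A_norm h Fs | Fs. in_A h Fs \<and> (\<forall>x. \<bar>F x - Fs x\<bar> \<le> \<epsilon>)}"

end

theory Submission
  imports Defs
begin


definition cpoly :: "nat \<Rightarrow> real \<Rightarrow> (real \<Rightarrow> real) \<Rightarrow> bool" where
 "cpoly N S f \<longleftrightarrow> (\<exists>b. (\<forall>u. f u = (\<Sum>n\<le>N. b n * cos (real n * u))) \<and> (\<Sum>n\<le>N. \<bar>b n\<bar>) \<le> S)"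

lemma cpoly_nonneg: "cpoly N S f \<Longrightarrow> 0 \<le> S"
  unfolding cpoly_def by (meson order_trans sum_nonneg abs_ge_zero)

lemma cpoly_bound: "cpoly N S f \<Longrightarrow> \<bar>f u\<bar> \<le> S"
proof -
  assume "cpoly N S f"
  then obtain b where b: "\<forall>u. f u = (\<Sum>n\<le>N. b n * cos (real n * u))" "(\<Sum>n\<le>N. \<bar>b n\<bar>) \<le> S"
    unfolding cpoly_def by blast
  have "\<bar>f u\<bar> \<le> (\<Sum>n\<le>N. \<bar>b n * cos (real n * u)\<bar>)" using b(1) sum_abs by metis
  also have "\<dots> \<le> (\<Sum>n\<le>N. \<bar>b n\<bar>)"
    by (intro sum_mono) (auto simp: abs_mult intro!: mult_left_le)
  finally show ?thesis using b(2) by linarith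
qed

lemma cpoly_mono:
  assumes "cpoly N S f" "N \<le> N'" "S \<le> S'" shows "cpoly N' S' f"
proof -
  obtain b where b: "\<forall>u. f u = (\<Sum>n\<le>N. b n * cos (real n * u))" "(\<Sum>n\<le>N. \<bar>b n\<bar>) \<le> S"
    using assms(1) unfolding cpoly_def by blast
  define b' where "b' n = (if n \<le> N then b n else 0)" for n
  have sub: "{..N} \<subseteq> {..N'}" using assms(2) by auto
  have e1: "(\<Sum>n\<le>N'. b' n * cos (real n * u)) = (\<Sum>n\<le>N. b n * cos (real n * u))" for u
    by (rule sum.mono_neutral_cong_right) (use sub in \<open>auto simp: b'_def\<close>)
  have e2: "(\<Sum>n\<le>N'. \<bar>b' n\<bar>) = (\<Sum>n\<le>N. \<bar>b n\<bar>)"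
    by (rule sum.mono_neutral_cong_right) (use sub in \<open>auto simp: b'_def\<close>)
  show ?thesis unfolding cpoly_def
    by (rule exI[of _ b']) (use b e1 e2 assms(3) in auto)
qed

lemma cpoly_zero: "cpoly N 0 (\<lambda>u. 0)"
  unfolding cpoly_def by (rule exI[of _ "\<lambda>n. 0"]) simp

lemma cpoly_cos: "n \<le> N \<Longrightarrow> cpoly N \<bar>a\<bar> (\<lambda>u. a * cos (real n * u))"
  unfolding cpoly_def
proof (intro exI[of _ "\<lambda>m. if m = n then a else 0"] conjI allI)
  fix u assume "n \<le> N"
  have "(\<Sum>m\<le>N. (if m = n then a else 0) * cos (real m * u)) = (\<Sum>m\<le>N. if m = n then a * cos (real m * u) else 0)"
    by (intro sum.cong) auto
  then show "a * cos (real n * u) = (\<Sum>m\<le>N. (if m = n then a else 0) * cos (real m * u))"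
    using \<open>n \<le> N\<close> by (simp add: sum.delta)
next
  assume "n \<le> N"
  have "(\<Sum>m\<le>N. \<bar>if m = n then a else 0\<bar>) = (\<Sum>m\<le>N. if m = n then \<bar>a\<bar> else 0)"
    by (intro sum.cong) auto
  then show "(\<Sum>m\<le>N. \<bar>if m = n then a else 0\<bar>) \<le> \<bar>a\<bar>" using \<open>n \<le> N\<close> by (simp add: sum.delta)
qed

lemma cpoly_add:
  assumes "cpoly N S1 f" "cpoly N S2 g" shows "cpoly N (S1 + S2) (\<lambda>u. f u + g u)"
proof -
  obtain b where b: "\<forall>u. f u = (\<Sum>n\<le>N. b n * cos (real n * u))" "(\<Sum>n\<le>N. \<bar>b n\<bar>) \<le> S1"
    using assms(1) unfolding cpoly_def by blast
  obtain c where c: "\<forall>u. g u = (\<Sum>n\<le>N. c n * cos (real n * u))" "(\<Sum>n\<le>N. \<bar>c n\<bar>) \<le> S2"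
    using assms(2) unfolding cpoly_def by blast
  have "(\<Sum>n\<le>N. \<bar>b n + c n\<bar>) \<le> (\<Sum>n\<le>N. \<bar>b n\<bar> + \<bar>c n\<bar>)" by (intro sum_mono) auto
  also have "\<dots> \<le> S1 + S2" using b c by (simp add: sum.distrib)
  finally show ?thesis unfolding cpoly_def
    by (intro exI[of _ "\<lambda>n. b n + c n"]) (use b c in \<open>auto simp: sum.distrib algebra_simps\<close>)
qed

lemma cpoly_sum:
  assumes "finite A" "\<And>i. i \<in> A \<Longrightarrow> cpoly N (S i) (f i)"
  shows "cpoly N (\<Sum>i\<in>A. S i) (\<lambda>u. \<Sum>i\<in>A. f i u)"
  using assms
proof (induction A rule: finite_induct)
  case empty then show ?case using cpoly_zero by simp
next
  case (insert x F)
  then show ?case using cpoly_add[of N "S x" "f x" "sum S F" "\<lambda>u. \<Sum>i\<in>F. f i u"] by simp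
qed

lemma cpoly_scale:
  assumes "cpoly N S f" shows "cpoly N (\<bar>a\<bar> * S) (\<lambda>u. a * f u)"
proof -
  obtain b where b: "\<forall>u. f u = (\<Sum>n\<le>N. b n * cos (real n * u))" "(\<Sum>n\<le>N. \<bar>b n\<bar>) \<le> S"
    using assms(1) unfolding cpoly_def by blast
  have "(\<Sum>n\<le>N. \<bar>a * b n\<bar>) = \<bar>a\<bar> * (\<Sum>n\<le>N. \<bar>b n\<bar>)" by (simp add: abs_mult sum_distrib_left)
  also have "\<dots> \<le> \<bar>a\<bar> * S" using b(2) by (simp add: mult_left_mono)
  finally show ?thesis unfolding cpoly_def
    by (intro exI[of _ "\<lambda>n. a * b n"]) (use b in \<open>auto simp: sum_distrib_left algebra_simps\<close>)
qed

lemma cos_prod_term: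
  "a * cos (real n * u) * cos (real m * u) =
     a/2 * cos (real (n + m) * u) + a/2 * cos (real (if n \<le> m then m - n else n - m) * u)"
proof -
  have c1: "cos (real n * u) * cos (real m * u) = (cos (real n * u - real m * u) + cos (real n * u + real m * u)) / 2"
    by (rule cos_times_cos)
  have c2: "cos (real n * u - real m * u) = cos (real (if n \<le> m then m - n else n - m) * u)"
  proof (cases "n \<le> m")
    case True
    then have e: "real n * u - real m * u = - (real (m - n) * u)" by (simp add: of_nat_diff left_diff_distrib)
    have "cos (real n * u - real m * u) = cos (real (m - n) * u)" unfolding e by (rule cos_minus)
    then show ?thesis using True by simp
  next
    case False
    then have "real n * u - real m * u = real (n - m) * u" by (simp add: of_nat_diff left_diff_distrib)
    then show ?thesis using False by simp
  qed
  have c3: "real n * u + real m * u = real (n + m) * u" by (simp add: distrib_right)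
  have "a * cos (real n * u) * cos (real m * u) = a * (cos (real n * u) * cos (real m * u))" by simp
  also have "\<dots> = a/2 * cos (real (n + m) * u) + a/2 * cos (real (if n \<le> m then m - n else n - m) * u)"
    unfolding c1 c2 c3 by (simp add: field_simps)
  finally show ?thesis .
qed

lemma cpoly_mult:
  assumes "cpoly N1 S1 f" "cpoly N2 S2 g" shows "cpoly (N1 + N2) (S1 * S2) (\<lambda>u. f u * g u)"
proof -
  obtain b where b: "\<forall>u. f u = (\<Sum>n\<le>N1. b n * cos (real n * u))" "(\<Sum>n\<le>N1. \<bar>b n\<bar>) \<le> S1"
    using assms(1) unfolding cpoly_def by blast
  obtain c where c: "\<forall>u. g u = (\<Sum>n\<le>N2. c n * cos (real n * u))" "(\<Sum>n\<le>N2. \<bar>c n\<bar>) \<le> S2"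
    using assms(2) unfolding cpoly_def by blast
  have eq: "f u * g u = (\<Sum>n\<le>N1. \<Sum>m\<le>N2. (b n * c m)/2 * cos (real (n + m) * u)
       + (b n * c m)/2 * cos (real (if n \<le> m then m - n else n - m) * u))" for u
  proof -
    have "f u * g u = (\<Sum>n\<le>N1. \<Sum>m\<le>N2. (b n * c m) * cos (real n * u) * cos (real m * u))"
      using b(1) c(1) by (simp add: sum_product algebra_simps)
    then show ?thesis by (simp only: cos_prod_term)
  qed
  have trm: "cpoly (N1 + N2) (\<bar>b n\<bar> * \<bar>c m\<bar>) (\<lambda>u. (b n * c m)/2 * cos (real (n + m) * u)
       + (b n * c m)/2 * cos (real (if n \<le> m then m - n else n - m) * u))"
    if "n \<le> N1" "m \<le> N2" for n m
  proof -
    have "cpoly (N1 + N2) (\<bar>(b n * c m)/2\<bar> + \<bar>(b n * c m)/2\<bar>) (\<lambda>u. (b n * c m)/2 * cos (real (n + m) * u)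
       + (b n * c m)/2 * cos (real (if n \<le> m then m - n else n - m) * u))"
      by (rule cpoly_add; rule cpoly_cos) (use that in auto)
    then show ?thesis by (simp add: abs_mult)
  qed
  have "cpoly (N1 + N2) (\<Sum>n\<le>N1. \<Sum>m\<le>N2. \<bar>b n\<bar> * \<bar>c m\<bar>) (\<lambda>u. f u * g u)"
    unfolding eq
    by (rule cpoly_sum, simp, rule cpoly_sum, simp, rule trm, auto)
  moreover have "(\<Sum>n\<le>N1. \<Sum>m\<le>N2. \<bar>b n\<bar> * \<bar>c m\<bar>) \<le> S1 * S2"
  proof -
    have "(\<Sum>n\<le>N1. \<Sum>m\<le>N2. \<bar>b n\<bar> * \<bar>c m\<bar>) = (\<Sum>n\<le>N1. \<bar>b n\<bar>) * (\<Sum>m\<le>N2. \<bar>c m\<bar>)"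
      by (simp add: sum_product)
    also have "\<dots> \<le> S1 * S2"
      using b(2) c(2) cpoly_nonneg[OF assms(1)] by (intro mult_mono) (auto simp: sum_nonneg)
    finally show ?thesis .
  qed
  ultimately show ?thesis using cpoly_mono by blast
qed



definition Dk :: "nat \<Rightarrow> real \<Rightarrow> real" where
  "Dk j u = 1 + 2 * (\<Sum>l\<in>{1..j}. cos (real l * u))"

definition Pk :: "nat \<Rightarrow> real \<Rightarrow> real" where
  "Pk q u = (\<Sum>j<q. Dk j u)"

lemma Dk_Suc: "Dk (Suc j) u = Dk j u + 2 * cos (real (Suc j) * u)"
  unfolding Dk_def by (simp add: algebra_simps)

lemma Dk_cpoly: "cpoly j (2 * real j + 1) (Dk j)"
proof -
  have c0: "cpoly j 1 (\<lambda>u. 1 * cos (real 0 * u))" using cpoly_cos[of 0 j 1] by simp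
  have "cpoly j (\<Sum>l\<in>{1..j}. \<bar>2\<bar>) (\<lambda>u. \<Sum>l\<in>{1..j}. 2 * cos (real l * u))"
    by (rule cpoly_sum) (use cpoly_cos[of _ j 2] in auto)
  then have "cpoly j (2 * real j) (\<lambda>u. \<Sum>l\<in>{1..j}. 2 * cos (real l * u))" by (simp add: mult.commute)
  from cpoly_add[OF c0 this] show ?thesis
    unfolding Dk_def by (simp add: sum_distrib_left algebra_simps)
qed

lemma sum_odd: "(\<Sum>j<q. 2 * real j + 1) = real q ^ 2"
  by (induction q) (auto simp: power2_eq_square algebra_simps)

lemma Pk_cpoly: "cpoly q (real q ^ 2) (Pk q)"
proof -
  have "cpoly q (\<Sum>j<q. 2 * real j + 1) (\<lambda>u. \<Sum>j<q. Dk j u)"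
    by (rule cpoly_sum) (auto intro: cpoly_mono[OF Dk_cpoly])
  then show ?thesis unfolding Pk_def[abs_def] sum_odd .
qed

lemma Dk_id: "Dk j u * (1 - cos u) = cos (real j * u) - cos (real (Suc j) * u)"
proof (induction j)
  case 0 then show ?case by (simp add: Dk_def)
next
  case (Suc j)
  have a: "cos (real (Suc (Suc j)) * u) = cos (real (Suc j) * u + u)" by (simp add: algebra_simps)
  have b: "cos (real j * u) = cos (real (Suc j) * u - u)" by (simp add: algebra_simps)
  have "Dk (Suc j) u * (1 - cos u) = cos (real j * u) - cos (real (Suc j) * u) + 2 * cos (real (Suc j) * u) * (1 - cos u)"
    using Suc by (simp add: Dk_Suc algebra_simps)
  also have "\<dots> = cos (real (Suc j) * u) - cos (real (Suc (Suc j)) * u)"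
    unfolding a b cos_add cos_diff by (simp add: algebra_simps)
  finally show ?case .
qed

lemma Pk_id: "Pk q u * (1 - cos u) = 1 - cos (real q * u)"
proof -
  have "Pk q u * (1 - cos u) = (\<Sum>j<q. cos (real j * u) - cos (real (Suc j) * u))"
    unfolding Pk_def sum_distrib_right Dk_id ..
  also have "\<dots> = 1 - cos (real q * u)"
    using sum_lessThan_telescope'[of "\<lambda>j. cos (real j * u)" q] by simp
  finally show ?thesis .
qed

lemma Pk_bound: "\<bar>Pk q u\<bar> \<le> real q ^ 2"
  using cpoly_bound[OF Pk_cpoly] .

lemma omc_upper: "1 - cos u \<le> (u::real) ^ 2 / 2"
proof -
  have "1 - cos u = 2 * sin (u/2) ^ 2" using cos_double_sin[of "u/2"] by simp
  also have "\<dots> \<le> 2 * (u/2) ^ 2"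
    using abs_sin_x_le_abs_x[of "u/2"] by (metis abs_ge_zero power2_abs power_mono mult_left_mono zero_le_numeral)
  finally show ?thesis by (simp add: power2_eq_square)
qed

lemma sin_lower: "0 \<le> (x::real) \<Longrightarrow> x - x ^ 3 / 6 \<le> sin x"
proof -
  assume x: "0 \<le> x"
  have "\<bar>sin x - (\<Sum>m<3. sin_coeff m * x ^ m)\<bar> \<le> inverse (fact 3) * \<bar>x\<bar> ^ 3"
    by (rule Maclaurin_sin_bound)
  moreover have "(\<Sum>m<3. sin_coeff m * x ^ m) = x"
    by (simp add: sin_coeff_def numeral_3_eq_3 lessThan_Suc)
  ultimately have "\<bar>sin x - x\<bar> \<le> x ^ 3 / 6" using x by (simp add: fact_numeral)
  then show ?thesis using abs_ge_minus_self[of "sin x - x"] by linarith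
qed

lemma omc_lower:
  assumes "\<bar>u\<bar> \<le> pi" shows "u ^ 2 / 8 \<le> 1 - cos u"
proof -
  define t where "t = \<bar>u\<bar> / 2"
  have t0: "0 \<le> t" and t1: "t \<le> pi / 2" using assms by (auto simp: t_def)
  have "t ^ 2 \<le> (pi/2) ^ 2" using t0 t1 by (intro power_mono) auto
  also have "\<dots> \<le> 3"
  proof -
    have p: "pi \<le> 3.2" using pi_approx by simp
    have "pi * pi \<le> 3.2 * 3.2" by (rule mult_mono) (use p in auto)
    then show ?thesis by (simp add: power2_eq_square)
  qed
  finally have t3: "t ^ 2 \<le> 3" .
  have s: "t * (1 - t^2/6) \<le> sin t" using sin_lower[OF t0] by (simp add: power3_eq_cube power2_eq_square algebra_simps)
  have h: "1/2 \<le> 1 - t^2/6" using t3 by simp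
  have "t / 2 \<le> sin t" using s h t0 mult_left_mono[OF h t0] by linarith
  then have "(t/2) ^ 2 \<le> sin t ^ 2" using t0 by (intro power_mono) auto
  moreover have "sin t ^ 2 = sin (u/2) ^ 2"
    by (cases "u \<ge> 0") (auto simp: t_def)
  moreover have "1 - cos u = 2 * sin (u/2) ^ 2" using cos_double_sin[of "u/2"] by simp
  moreover have "(t/2)^2 = u^2/16" by (simp add: t_def power2_eq_square)
  ultimately show ?thesis by simp
qed

lemma Pk_upper:
  assumes "\<bar>u\<bar> \<le> pi" "q \<ge> 1" shows "\<bar>Pk q u\<bar> \<le> 32 * real q ^ 2 / (1 + real q ^ 2 * u ^ 2)"
proof -
  define Q where "Q = real q ^ 2"
  have Q: "Q \<ge> 1" using assms(2) by (simp add: Q_def)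
  have B2: "\<bar>Pk q u\<bar> \<le> Q" unfolding Q_def by (rule Pk_bound)
  have d: "0 < 1 + Q * u ^ 2" using Q by (simp add: add_pos_nonneg)
  have "\<bar>Pk q u\<bar> * (1 + Q * u^2) \<le> 32 * Q"
  proof (cases "Q * u ^ 2 \<le> 1")
    case True
    have "\<bar>Pk q u\<bar> * (1 + Q * u^2) \<le> Q * 2"
      by (rule mult_mono) (use B2 True Q in auto)
    also have "\<dots> \<le> 32 * Q" using Q by simp
    finally show ?thesis .
  next
    case False
    then have u0: "u \<noteq> 0" by auto
    have lo: "u ^ 2 / 8 \<le> 1 - cos u" using omc_lower[OF assms(1)] .
    have u2: "0 < u ^ 2" using u0 by simp
    have pos: "0 < 1 - cos u" using lo u2 by linarith
    have "\<bar>Pk q u\<bar> * (1 - cos u) = \<bar>Pk q u * (1 - cos u)\<bar>" using pos by (simp add: abs_mult)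
    also have "\<dots> = \<bar>1 - cos (real q * u)\<bar>" by (simp only: Pk_id)
    also have "\<dots> \<le> 2" by (simp add: abs_le_iff)
    finally have B0: "\<bar>Pk q u\<bar> * (1 - cos u) \<le> 2" .
    have "\<bar>Pk q u\<bar> * (u^2/8) \<le> \<bar>Pk q u\<bar> * (1 - cos u)"
      by (rule mult_left_mono) (use lo in auto)
    then have B1: "\<bar>Pk q u\<bar> * u ^ 2 \<le> 16" using B0 by simp
    have "\<bar>Pk q u\<bar> * (1 + Q * u^2) \<le> \<bar>Pk q u\<bar> * (2 * Q * u^2)" using False
      by (intro mult_left_mono) auto
    also have "\<dots> = 2 * Q * (\<bar>Pk q u\<bar> * u^2)" by simp
    also have "\<dots> \<le> 2 * Q * 16" using B1 Q by (intro mult_left_mono) auto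
    finally show ?thesis by simp
  qed
  then have "\<bar>Pk q u\<bar> \<le> 32 * Q / (1 + Q * u ^ 2)" using d by (simp add: pos_le_divide_eq)
  then show ?thesis unfolding Q_def .
qed

lemma Pk_lower:
  assumes "\<bar>u\<bar> \<le> 1 / real q" "q \<ge> 1" shows "real q ^ 2 / 4 \<le> Pk q u"
proof (cases "u = 0")
  case True
  have "Dk j 0 = 2 * real j + 1" for j unfolding Dk_def by simp
  then have "Pk q 0 = real q ^ 2" unfolding Pk_def using sum_odd by simp
  then show ?thesis using True by simp
next
  case False
  have q1: "real q \<ge> 1" using assms(2) by simp
  have uq: "\<bar>real q * u\<bar> \<le> 1" using assms q1 by (simp add: abs_mult field_simps)
  have upi: "\<bar>u\<bar> \<le> pi" using assms(1) q1 pi_gt3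
    by (smt (verit) divide_le_eq_1_pos)
  have u2: "0 < u ^ 2" using False by simp
  have hi: "1 - cos u \<le> u ^ 2 / 2" by (rule omc_upper)
  have pos: "0 < 1 - cos u" using omc_lower[OF upi] u2 by linarith
  have lo: "(real q * u) ^ 2 / 8 \<le> 1 - cos (real q * u)"
    by (rule omc_lower) (use uq pi_gt3 in linarith)
  have "Pk q u = (1 - cos (real q * u)) / (1 - cos u)" using Pk_id[of q u] pos
    by (simp add: field_simps)
  also have "\<dots> \<ge> ((real q * u) ^ 2 / 8) / (u ^ 2 / 2)"
    using lo hi pos by (intro frac_le) auto
  finally show ?thesis using u2 by (simp add: power_mult_distrib field_simps)
qed



lemma Pk_cont[continuous_intros]: "continuous_on S (Pk q)"
  unfolding Pk_def[abs_def] Dk_def by (intro continuous_intros)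

lemma int_cont: "continuous_on {a..b} (f::real\<Rightarrow>real) \<Longrightarrow> f integrable_on {a..b}"
  by (rule integrable_continuous_real)

lemma P2_int_lower:
  assumes "q \<ge> 1" shows "real q ^ 3 / 8 \<le> integral {-pi..pi} (\<lambda>u. Pk q u ^ 2)"
proof -
  have q1: "real q \<ge> 1" using assms by simp
  have "1 / real q \<le> 1" using q1 by simp
  then have sub: "{-(1/real q)..1/real q} \<subseteq> {-pi..pi}"
    using pi_gt3 by auto
  have "integral {-(1/real q)..1/real q} (\<lambda>u. (real q ^ 2 / 4) ^ 2) \<le> integral {-(1/real q)..1/real q} (\<lambda>u. Pk q u ^ 2)"
  proof (rule integral_le)
    show "(\<lambda>u. (real q ^ 2 / 4) ^ 2) integrable_on {- (1 / real q)..1 / real q}" by (rule integrable_const_ivl)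
    show "(\<lambda>u. Pk q u ^ 2) integrable_on {- (1 / real q)..1 / real q}"
      by (intro int_cont continuous_intros)
    fix u assume "u \<in> {- (1 / real q)..1 / real q}"
    then have "\<bar>u\<bar> \<le> 1 / real q" by auto
    from Pk_lower[OF this assms] show "(real q ^ 2 / 4) ^ 2 \<le> Pk q u ^ 2"
      by (intro power_mono) auto
  qed
  also have "\<dots> \<le> integral {-pi..pi} (\<lambda>u. Pk q u ^ 2)"
    by (rule integral_subset_le[OF sub]) (auto intro!: int_cont continuous_intros)
  finally have "integral {-(1/real q)..1/real q} (\<lambda>u. (real q ^ 2 / 4) ^ 2) \<le> integral {-pi..pi} (\<lambda>u. Pk q u ^ 2)" .
  moreover have "integral {-(1/real q)..1/real q} (\<lambda>u. (real q ^ 2 / 4) ^ 2) = real q ^ 3 / 8"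
    using q1 by (simp add: field_simps power2_eq_square power3_eq_cube)
  ultimately show ?thesis by simp
qed

lemma G_deriv: "((\<lambda>u. - (q^2 / 2) / (1 + q^2 * u^2)) has_real_derivative q^4 * u / (1 + q^2 * u^2)^2) (at (u::real))"
proof -
  have pos: "0 < 1 + q^2 * u^2" by (simp add: add_pos_nonneg)
  show ?thesis
  apply (rule derivative_eq_intros refl | simp)+
  using pos apply simp
  apply (simp add: divide_simps)
  apply (simp add: algebra_simps power2_eq_square power4_eq_xxxx)
  done
qed

lemma moment_aux:
  fixes q :: real assumes "q > 0"
  shows "integral {0..pi} (\<lambda>u. q^4 * u / (1 + q^2 * u^2)^2) \<le> q^2 / 2"
proof -
  define G where "G u = - (q^2 / 2) / (1 + q^2 * u^2)" for u
  have pos: "0 < 1 + q^2 * u^2" for u by (simp add: add_pos_nonneg)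
  have der: "(G has_vector_derivative q^4 * u / (1 + q^2 * u^2)^2) (at u within {0..pi})" for u
  proof -
    have "(G has_real_derivative q^4 * u / (1 + q^2 * u^2)^2) (at u)"
      unfolding G_def[abs_def] by (rule G_deriv)
    then show ?thesis by (simp add: has_real_derivative_iff_has_vector_derivative has_vector_derivative_at_within)
  qed
  have "((\<lambda>u. q^4 * u / (1 + q^2 * u^2)^2) has_integral (G pi - G 0)) {0..pi}"
    by (rule fundamental_theorem_of_calculus) (use der in auto)
  then have "integral {0..pi} (\<lambda>u. q^4 * u / (1 + q^2 * u^2)^2) = G pi - G 0" by (rule integral_unique)
  also have "\<dots> \<le> q^2 / 2"
  proof -
    have "G pi \<le> 0" unfolding G_def using pos[of pi] by (simp add: divide_nonpos_pos)
    moreover have "G 0 = - (q^2/2)" by (simp add: G_def)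
    ultimately show ?thesis by simp
  qed
  finally show ?thesis .
qed

lemma P2_moment:
  assumes "q \<ge> 1" shows "integral {-pi..pi} (\<lambda>u. Pk q u ^ 2 * \<bar>u\<bar>) \<le> 1024 * real q ^ 2"
proof -
  define Q where "Q = real q"
  have Q: "Q \<ge> 1" using assms by (simp add: Q_def)
  define g where "g u = 1024 * (Q^4 * \<bar>u\<bar> / (1 + Q^2 * u^2)^2)" for u
  have pos: "0 < 1 + Q^2 * u^2" for u by (simp add: add_pos_nonneg)
  have gc: "continuous_on S g" for S unfolding g_def using pos
    by (intro continuous_intros) (metis less_irrefl power_not_zero)
  have le: "Pk q u ^ 2 * \<bar>u\<bar> \<le> g u" if "u \<in> {-pi..pi}" for u
  proof -
    have "\<bar>Pk q u\<bar> \<le> 32 * Q^2 / (1 + Q^2 * u^2)" using Pk_upper[of u q] that assms by (auto simp: Q_def)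
    then have "\<bar>Pk q u\<bar>^2 \<le> (32 * Q^2 / (1 + Q^2 * u^2))^2" by (intro power_mono) auto
    then have "Pk q u ^ 2 * \<bar>u\<bar> \<le> (32 * Q^2 / (1 + Q^2 * u^2))^2 * \<bar>u\<bar>"
      by (intro mult_right_mono) auto
    also have "\<dots> = g u" by (simp add: g_def power_divide power_mult_distrib field_simps)
    finally show ?thesis .
  qed
  have "integral {-pi..pi} (\<lambda>u. Pk q u ^ 2 * \<bar>u\<bar>) \<le> integral {-pi..pi} g"
    by (rule integral_le) (use le in \<open>auto intro!: int_cont continuous_intros gc\<close>)
  also have "integral {-pi..pi} g = integral {-pi..0} g + integral {0..pi} g"
    using Henstock_Kurzweil_Integration.integral_combine[where f=g and a="-pi" and c=0 and b=pi] int_cont[OF gc] by auto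
  also have "integral {-pi..0} g = integral {0..pi} g"
  proof -
    have "integral {-pi..0} (\<lambda>x. g (-x)) = integral {0..pi} g" using Henstock_Kurzweil_Integration.integral_reflect_real[of pi 0 g] by simp
    moreover have "(\<lambda>x. g (-x)) = g" by (auto simp: g_def)
    ultimately show ?thesis by simp
  qed
  also have "integral {0..pi} g = 1024 * integral {0..pi} (\<lambda>u. Q^4 * u / (1 + Q^2 * u^2)^2)"
  proof -
    have "integral {0..pi} g = integral {0..pi} (\<lambda>u. 1024 * (Q^4 * u / (1 + Q^2 * u^2)^2))"
      by (rule integral_cong) (auto simp: g_def)
    then show ?thesis by (simp only: Henstock_Kurzweil_Integration.integral_mult_right)
  qed
  also have "\<dots> \<le> 1024 * (Q^2/2)" using moment_aux[of Q] Q by simp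
  finally show ?thesis by (simp add: Q_def)
qed

definition Zq :: "nat \<Rightarrow> real" where
  "Zq q = integral {-pi..pi} (\<lambda>u. Pk q u ^ 2) / (2 * pi)"

definition Jk :: "nat \<Rightarrow> real \<Rightarrow> real" where
  "Jk q u = Pk q u ^ 2 / Zq q"

lemma Zq_lower: "q \<ge> 1 \<Longrightarrow> real q ^ 3 / (16 * pi) \<le> Zq q"
proof -
  assume q: "q \<ge> 1"
  have "real q ^ 3 / (16 * pi) = (real q ^ 3 / 8) / (2 * pi)" by simp
  also have "\<dots> \<le> integral {-pi..pi} (\<lambda>u. Pk q u ^ 2) / (2 * pi)"
    by (rule divide_right_mono[OF P2_int_lower[OF q]]) simp
  finally show ?thesis unfolding Zq_def .
qed

lemma Zq_pos: "q \<ge> 1 \<Longrightarrow> 0 < Zq q"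
proof -
  assume q: "q \<ge> 1"
  have "0 < real q ^ 3 / (16 * pi)" using q by simp
  then show ?thesis using Zq_lower[OF q] by linarith
qed

lemma Jk_nonneg: "q \<ge> 1 \<Longrightarrow> 0 \<le> Jk q u"
  unfolding Jk_def using Zq_pos[of q] by simp

lemma Jk_cont[continuous_intros]: "continuous_on S (Jk q)"
  unfolding Jk_def[abs_def] divide_inverse by (intro continuous_intros)

lemma Jk_int: "q \<ge> 1 \<Longrightarrow> integral {-pi..pi} (Jk q) = 2 * pi"
proof -
  assume q: "q \<ge> 1"
  have "integral {-pi..pi} (Jk q) = integral {-pi..pi} (\<lambda>u. Pk q u ^ 2) / Zq q"
    unfolding Jk_def[abs_def] by (rule Henstock_Kurzweil_Integration.integral_divide)
  also have "integral {-pi..pi} (\<lambda>u. Pk q u ^ 2) = 2 * pi * Zq q" by (simp add: Zq_def)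
  finally show ?thesis using Zq_pos[OF q] by simp
qed

lemma Jk_moment:
  assumes "q \<ge> 1" shows "integral {-pi..pi} (\<lambda>u. Jk q u * \<bar>u\<bar>) / (2 * pi) \<le> 8192 / real q"
proof -
  have I: "integral {-pi..pi} (\<lambda>u. Jk q u * \<bar>u\<bar>) = integral {-pi..pi} (\<lambda>u. Pk q u ^ 2 * \<bar>u\<bar>) / Zq q"
  proof -
    have e: "(\<lambda>u. Jk q u * \<bar>u\<bar>) = (\<lambda>u. Pk q u ^ 2 * \<bar>u\<bar> / Zq q)" by (rule ext) (simp add: Jk_def)
    show ?thesis unfolding e by (rule Henstock_Kurzweil_Integration.integral_divide)
  qed
  have Z: "integral {-pi..pi} (\<lambda>u. Pk q u ^ 2) = 2 * pi * Zq q" by (simp add: Zq_def)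
  have lo: "real q ^ 3 / 8 \<le> 2 * pi * Zq q" using P2_int_lower[OF assms] Z by simp
  have zp: "0 < Zq q" by (rule Zq_pos[OF assms])
  have q1: "real q \<ge> 1" using assms by simp
  have "integral {-pi..pi} (\<lambda>u. Jk q u * \<bar>u\<bar>) / (2 * pi) = integral {-pi..pi} (\<lambda>u. Pk q u ^ 2 * \<bar>u\<bar>) / (2 * pi * Zq q)"
    using I by simp
  also have "\<dots> \<le> 1024 * real q ^ 2 / (2 * pi * Zq q)"
    using P2_moment[OF assms] zp by (intro divide_right_mono) auto
  also have "\<dots> \<le> 1024 * real q ^ 2 / (real q ^ 3 / 8)"
  proof (rule divide_left_mono[OF lo])
    show "0 \<le> 1024 * real q ^ 2" by simp
    show "0 < 2 * pi * Zq q * (real q ^ 3 / 8)" using zp q1 by (intro mult_pos_pos) simp_all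
  qed
  also have "\<dots> = 8192 / real q" using q1 by (simp add: field_simps power2_eq_square power3_eq_cube)
  finally show ?thesis .
qed

lemma Jk_cpoly:
  assumes "q \<ge> 1" shows "cpoly (2 * q) (16 * pi * real q) (Jk q)"
proof -
  have "cpoly (q + q) (real q ^ 2 * real q ^ 2) (\<lambda>u. Pk q u * Pk q u)"
    by (rule cpoly_mult[OF Pk_cpoly Pk_cpoly])
  then have cp: "cpoly (q + q) (\<bar>1 / Zq q\<bar> * (real q ^ 2 * real q ^ 2)) (\<lambda>u. 1 / Zq q * (Pk q u * Pk q u))"
    by (rule cpoly_scale)
  have le: "\<bar>1 / Zq q\<bar> * (real q ^ 2 * real q ^ 2) \<le> 16 * pi * real q"
  proof -
    have zp: "0 < Zq q" by (rule Zq_pos[OF assms])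
    have q1: "real q \<ge> 1" using assms by simp
    have "\<bar>1 / Zq q\<bar> * (real q ^ 2 * real q ^ 2) = real q ^ 4 / Zq q"
      using zp by (simp add: power_add[symmetric])
    also have "\<dots> \<le> real q ^ 4 / (real q ^ 3 / (16 * pi))"
    proof (rule divide_left_mono[OF Zq_lower[OF assms]])
      show "0 \<le> real q ^ 4" by simp
      show "0 < Zq q * (real q ^ 3 / (16 * pi))" using zp q1 by (intro mult_pos_pos) simp_all
    qed
    also have "\<dots> = 16 * pi * real q"
    proof -
      have "real q ^ 4 = real q ^ 3 * real q" by (simp add: power_Suc2[symmetric] numeral_eq_Suc)
      then show ?thesis using q1 by simp
    qed
    finally show ?thesis .
  qed
  have "cpoly (2 * q) (16 * pi * real q) (\<lambda>u. 1 / Zq q * (Pk q u * Pk q u))"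
    by (rule cpoly_mono[OF cp _ le]) simp
  moreover have "(\<lambda>u. 1 / Zq q * (Pk q u * Pk q u)) = Jk q"
    by (auto simp: Jk_def power2_eq_square)
  ultimately show ?thesis by simp
qed



lemma per_nat: "periodic_2pi f \<Longrightarrow> f (x + 2 * pi * real n) = f x"
proof (induction n arbitrary: x)
  case 0 then show ?case by simp
next
  case (Suc n)
  have "f (x + 2 * pi * real (Suc n)) = f ((x + 2 * pi * real n) + 2 * pi)" by (simp add: algebra_simps)
  also have "\<dots> = f (x + 2 * pi * real n)" using Suc.prems unfolding periodic_2pi_def by blast
  finally show ?case using Suc by simp
qed

lemma per_int: "periodic_2pi f \<Longrightarrow> f (x + 2 * pi * real_of_int n) = f x"
proof (cases "n \<ge> 0")
  case True
  assume p: "periodic_2pi f"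
  then show ?thesis using per_nat[OF p, of x "nat n"] True by simp
next
  case False
  assume p: "periodic_2pi f"
  have "f ((x + 2 * pi * real_of_int n) + 2 * pi * real (nat (-n))) = f (x + 2 * pi * real_of_int n)"
    by (rule per_nat[OF p])
  moreover have "(x + 2 * pi * real_of_int n) + 2 * pi * real (nat (-n)) = x" using False by simp
  ultimately show ?thesis by simp
qed

lemma per_reduce: "\<exists>n::int. x - 2 * pi * real_of_int n \<in> {-pi..pi}"
proof -
  define n where "n = \<lfloor>(x + pi) / (2 * pi)\<rfloor>"
  have a: "real_of_int n \<le> (x + pi) / (2 * pi)" "(x + pi) / (2 * pi) < real_of_int n + 1"
    unfolding n_def by linarith+
  have "2 * pi * real_of_int n \<le> x + pi" using a(1) by (simp add: field_simps)
  moreover have "x + pi < 2 * pi * real_of_int n + 2 * pi" using a(2) by (simp add: field_simps)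
  ultimately show ?thesis by (intro exI[of _ n]) auto
qed

lemma per_bounded:
  assumes c: "continuous_on UNIV f" and p: "periodic_2pi f"
  shows "\<exists>B. \<forall>x. \<bar>f x\<bar> \<le> B"
proof -
  have "compact (f ` {-pi..pi})" by (rule compact_continuous_image) (use c continuous_on_subset in auto)
  then obtain B where B: "\<forall>y\<in>f ` {-pi..pi}. norm y \<le> B" using compact_imp_bounded bounded_iff by metis
  have "\<bar>f x\<bar> \<le> B" for x
  proof -
    obtain n :: int where n: "x - 2 * pi * real_of_int n \<in> {-pi..pi}" using per_reduce by blast
    have "f x = f (x - 2 * pi * real_of_int n)" using per_int[OF p, of "x - 2 * pi * real_of_int n" n] by simp
    then show ?thesis using B n by auto
  qed
  then show ?thesis by blast
qed

lemma per_shift_integral_aux: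
  assumes c: "continuous_on UNIV f" and p: "periodic_2pi f" and a: "a \<in> {-pi..pi}"
  shows "integral {a..a + 2*pi} f = integral {-pi..pi} (f::real \<Rightarrow> real)"
proof -
  have int: "f integrable_on {s..t}" for s t by (rule int_cont) (use c continuous_on_subset in auto)
  have "integral {a..pi} f + integral {pi..a + 2*pi} f = integral {a..a + 2*pi} f"
    by (rule Henstock_Kurzweil_Integration.integral_combine) (use a int in auto)
  moreover have "integral {pi..a + 2*pi} f = integral {-pi..a} f"
  proof -
    have "integral {(-pi + 2*pi) - 2*pi..(a + 2*pi) - 2*pi} (\<lambda>x. f (x + 2*pi)) = integral {-pi + 2*pi..a + 2*pi} f"
      by (rule integral_shift_real_ivl)
    moreover have "(\<lambda>x. f (x + 2*pi)) = f" using p unfolding periodic_2pi_def by auto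
    ultimately show ?thesis by simp
  qed
  moreover have "integral {-pi..a} f + integral {a..pi} f = integral {-pi..pi} f"
    by (rule Henstock_Kurzweil_Integration.integral_combine) (use a int in auto)
  ultimately show ?thesis by linarith
qed

lemma per_shift_integral:
  assumes c: "continuous_on UNIV f" and p: "periodic_2pi f"
  shows "integral {a..a + 2*pi} f = integral {-pi..pi} (f::real \<Rightarrow> real)"
proof -
  obtain n :: int where n: "a - 2 * pi * real_of_int n \<in> {-pi..pi}" using per_reduce by blast
  define a' where "a' = a - 2 * pi * real_of_int n"
  define s where "s = 2 * pi * real_of_int n"
  have fs: "(\<lambda>x. f (x + s)) = f" using per_int[OF p] by (auto simp: s_def)
  have h: "integral {a - s..a + 2*pi - s} f = integral {a..a+2*pi} f"
    using integral_shift_real_ivl[where f=f and a=a and b="a+2*pi" and c=s] unfolding fs .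
  have e: "a - s = a'" "a + 2*pi - s = a' + 2*pi" by (auto simp: a'_def s_def)
  have "integral {a'..a' + 2*pi} f = integral {a..a + 2*pi} f" using h unfolding e .
  moreover have "integral {a'..a' + 2*pi} f = integral {-pi..pi} f"
    by (rule per_shift_integral_aux[OF c p]) (use n in \<open>simp add: a'_def\<close>)
  ultimately show ?thesis by simp
qed

lemma per_integral:
  assumes c: "continuous_on UNIV f" and p: "periodic_2pi f"
  shows "integral {-pi..pi} (\<lambda>u. f (x - u)) = integral {-pi..pi} (f::real \<Rightarrow> real)"
proof -
  have "integral {-pi..-(-pi)} (\<lambda>u. (\<lambda>v. f (v + x)) (-u)) = integral {-pi..pi} (\<lambda>v. f (v + x))"
    by (rule Henstock_Kurzweil_Integration.integral_reflect_real)
  then have e1: "integral {-pi..pi} (\<lambda>u. f (x - u)) = integral {-pi..pi} (\<lambda>v. f (v + x))" by simp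
  have "integral {(-pi + x) - x..(pi + x) - x} (\<lambda>v. f (v + x)) = integral {-pi + x..pi + x} f"
    by (rule integral_shift_real_ivl)
  then have e2: "integral {-pi..pi} (\<lambda>v. f (v + x)) = integral {(-pi + x)..(-pi + x) + 2*pi} f" by simp
  show ?thesis unfolding e1 e2 by (rule per_shift_integral[OF c p])
qed



lemma cos_nat_per: "cos (real n * (u + 2 * pi)) = cos (real n * u)"
proof -
  have "real n * (u + 2 * pi) = real n * u + 2 * real n * pi" by (simp add: algebra_simps)
  then show ?thesis by (simp add: cos_add)
qed

lemma cpoly_per: "cpoly N S f \<Longrightarrow> f (u + 2 * pi) = f u"
  unfolding cpoly_def using cos_nat_per by auto

lemma Jk_per: "q \<ge> 1 \<Longrightarrow> Jk q (u + 2 * pi) = Jk q u"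
  using cpoly_per[OF Jk_cpoly] .

lemma Jk_per': "q \<ge> 1 \<Longrightarrow> Jk q (u - 2 * pi) = Jk q u"
  using Jk_per[of q "u - 2 * pi"] by simp

lemma cont_comp: "continuous_on UNIV f \<Longrightarrow> continuous_on S g \<Longrightarrow> continuous_on S (\<lambda>x. f (g x))"
  using continuous_on_compose2[of UNIV f S g] by auto

definition Tq :: "nat \<Rightarrow> (real \<Rightarrow> real) \<Rightarrow> real \<Rightarrow> real" where
  "Tq q f x = integral {-pi..pi} (\<lambda>u. Jk q u * f (x - u)) / (2 * pi)"

definition Rq :: "nat \<Rightarrow> (real \<Rightarrow> real) \<Rightarrow> real \<Rightarrow> real" where
  "Rq q f x = f x - Tq q f x"

lemma T_integrable:
  assumes "continuous_on UNIV f"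
  shows "(\<lambda>u. Jk q u * f (x - u)) integrable_on {-pi..pi}"
  by (intro int_cont continuous_intros cont_comp[OF assms])

lemma T_per: "periodic_2pi f \<Longrightarrow> periodic_2pi (Tq q f)"
proof -
  assume p: "periodic_2pi f"
  have "f (x + 2 * pi - u) = f (x - u)" for x u
    using p unfolding periodic_2pi_def by (metis add_diff_eq diff_add_eq)
  then show ?thesis unfolding periodic_2pi_def Tq_def by simp
qed

lemma T_bound:
  assumes q: "q \<ge> 1" and c: "continuous_on UNIV f" and B: "\<And>x. \<bar>f x\<bar> \<le> B"
  shows "\<bar>Tq q f x\<bar> \<le> B"
proof -
  have "norm (integral {-pi..pi} (\<lambda>u. Jk q u * f (x - u))) \<le> integral {-pi..pi} (\<lambda>u. Jk q u * B)"
  proof (rule Henstock_Kurzweil_Integration.integral_norm_bound_integral)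
    show "(\<lambda>u. Jk q u * f (x - u)) integrable_on {-pi..pi}" by (rule T_integrable[OF c])
    show "(\<lambda>u. Jk q u * B) integrable_on {-pi..pi}" by (intro int_cont continuous_intros)
    fix u show "norm (Jk q u * f (x - u)) \<le> Jk q u * B"
      using Jk_nonneg[OF q, of u] B[of "x - u"] by (simp add: abs_mult mult_left_mono)
  qed
  also have "\<dots> = 2 * pi * B" using Jk_int[OF q] by simp
  finally show ?thesis unfolding Tq_def by (simp add: field_simps)
qed

lemma R_gen:
  assumes q: "q \<ge> 1" and c: "continuous_on UNIV f" and pc: "continuous_on {-pi..pi} \<phi>"
    and le: "\<And>u. u \<in> {-pi..pi} \<Longrightarrow> \<bar>f x - f (x - u)\<bar> \<le> \<phi> u"
  shows "\<bar>Rq q f x\<bar> \<le> integral {-pi..pi} (\<lambda>u. Jk q u * \<phi> u) / (2 * pi)"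
proof -
  have i1: "(\<lambda>u. Jk q u * f x) integrable_on {-pi..pi}" by (intro int_cont continuous_intros)
  have i2: "(\<lambda>u. Jk q u * f (x - u)) integrable_on {-pi..pi}" by (rule T_integrable[OF c])
  have fx: "f x = integral {-pi..pi} (\<lambda>u. Jk q u * f x) / (2 * pi)"
    using Jk_int[OF q] by simp
  have "Rq q f x = (integral {-pi..pi} (\<lambda>u. Jk q u * f x) - integral {-pi..pi} (\<lambda>u. Jk q u * f (x - u))) / (2 * pi)"
    unfolding Rq_def Tq_def by (subst fx) (simp add: diff_divide_distrib)
  also have "\<dots> = integral {-pi..pi} (\<lambda>u. Jk q u * (f x - f (x - u))) / (2 * pi)"
    using Henstock_Kurzweil_Integration.integral_diff[OF i1 i2] by (simp add: right_diff_distrib)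
  finally have e: "Rq q f x = integral {-pi..pi} (\<lambda>u. Jk q u * (f x - f (x - u))) / (2 * pi)" .
  have "norm (integral {-pi..pi} (\<lambda>u. Jk q u * (f x - f (x - u)))) \<le> integral {-pi..pi} (\<lambda>u. Jk q u * \<phi> u)"
  proof (rule Henstock_Kurzweil_Integration.integral_norm_bound_integral)
    show "(\<lambda>u. Jk q u * (f x - f (x - u))) integrable_on {-pi..pi}"
      by (intro int_cont continuous_intros cont_comp[OF c])
    show "(\<lambda>u. Jk q u * \<phi> u) integrable_on {-pi..pi}"
      by (intro int_cont continuous_intros pc)
    fix u assume "u \<in> {-pi..pi}"
    then show "norm (Jk q u * (f x - f (x - u))) \<le> Jk q u * \<phi> u"
      using Jk_nonneg[OF q, of u] le[of u] by (simp add: abs_mult mult_left_mono)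
  qed
  then show ?thesis unfolding e by (simp add: divide_right_mono)
qed

lemma R_lip:
  assumes q: "q \<ge> 1" and c: "continuous_on UNIV f"
    and d: "\<And>x. (f has_real_derivative f' x) (at x)" and B: "\<And>x. \<bar>f' x\<bar> \<le> B"
  shows "\<bar>Rq q f x\<bar> \<le> B * (8192 / real q)"
proof -
  have le: "\<bar>f x - f (x - u)\<bar> \<le> B * \<bar>u\<bar>" for u
  proof (cases "u = 0")
    case True then show ?thesis by simp
  next
    case False
    have "\<exists>z. min (x - u) x < z \<and> z < max (x - u) x \<and> f (max (x - u) x) - f (min (x - u) x) = (max (x - u) x - min (x - u) x) * f' z"
      by (rule MVT2) (use False d in auto)
    then obtain z where z: "f (max (x - u) x) - f (min (x - u) x) = (max (x - u) x - min (x - u) x) * f' z" by blast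
    have "\<bar>f x - f (x - u)\<bar> = \<bar>f (max (x - u) x) - f (min (x - u) x)\<bar>"
      by (cases "u \<ge> 0") (auto simp: max_def min_def)
    also have "\<dots> = \<bar>u\<bar> * \<bar>f' z\<bar>" unfolding z by (cases "u \<ge> 0") (auto simp: max_def min_def abs_mult)
    also have "\<dots> \<le> \<bar>u\<bar> * B" by (rule mult_left_mono[OF B]) simp
    finally show ?thesis by (simp add: mult.commute)
  qed
  have "\<bar>Rq q f x\<bar> \<le> integral {-pi..pi} (\<lambda>u. Jk q u * (B * \<bar>u\<bar>)) / (2 * pi)"
    by (rule R_gen[OF q c]) (auto intro!: continuous_intros le)
  also have "integral {-pi..pi} (\<lambda>u. Jk q u * (B * \<bar>u\<bar>)) = B * integral {-pi..pi} (\<lambda>u. Jk q u * \<bar>u\<bar>)"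
  proof -
    have "(\<lambda>u. Jk q u * (B * \<bar>u\<bar>)) = (\<lambda>u. B * (Jk q u * \<bar>u\<bar>))" by (auto simp: mult_ac)
    then show ?thesis by (simp only: Henstock_Kurzweil_Integration.integral_mult_right)
  qed
  also have "B * integral {-pi..pi} (\<lambda>u. Jk q u * \<bar>u\<bar>) / (2 * pi) = B * (integral {-pi..pi} (\<lambda>u. Jk q u * \<bar>u\<bar>) / (2 * pi))"
    by simp
  also have "\<dots> \<le> B * (8192 / real q)"
  proof -
    have "0 \<le> B" using B[of 0] by linarith
    then show ?thesis using Jk_moment[OF q] by (rule mult_left_mono[rotated])
  qed
  finally show ?thesis .
qed



lemma powr_m1: "0 < x \<Longrightarrow> x powr (a - 1) * x = (x::real) powr a"
  by (simp add: powr_diff)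

lemma powr_split:
  fixes u d a :: real
  assumes d: "0 < d" and a: "0 < a" "a \<le> 1"
  shows "\<bar>u\<bar> powr a \<le> d powr a + d powr (a - 1) * \<bar>u\<bar>"
proof (cases "\<bar>u\<bar> \<le> d")
  case True
  have "\<bar>u\<bar> powr a \<le> d powr a" by (rule powr_mono2) (use True a in auto)
  moreover have "0 \<le> d powr (a - 1) * \<bar>u\<bar>" by simp
  ultimately show ?thesis by linarith
next
  case False
  then have u: "0 < \<bar>u\<bar>" using d by linarith
  have "\<bar>u\<bar> powr a = \<bar>u\<bar> powr (a - 1) * \<bar>u\<bar>"
    using powr_m1[OF u] by simp
  also have "\<dots> \<le> d powr (a - 1) * \<bar>u\<bar>"
    using False d a by (intro mult_right_mono powr_mono2') auto
  finally show ?thesis using d by (simp add: add_increasing)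
qed

lemma R_hold:
  assumes q: "q \<ge> 1" and c: "continuous_on UNIV f" and a: "0 < a" "a \<le> 1" and C: "0 \<le> C"
    and H: "\<And>x y. \<bar>f x - f y\<bar> \<le> C * \<bar>x - y\<bar> powr a"
  shows "\<bar>Rq q f x\<bar> \<le> 2 * C * (8192 / real q) powr a"
proof -
  define d where "d = 8192 / real q"
  have d: "0 < d" using q by (simp add: d_def)
  define \<phi> where "\<phi> u = C * d powr a + C * d powr (a - 1) * \<bar>u\<bar>" for u
  have le: "\<bar>f x - f (x - u)\<bar> \<le> \<phi> u" for u
  proof -
    have "\<bar>f x - f (x - u)\<bar> \<le> C * \<bar>u\<bar> powr a" using H[of x "x - u"] by simp
    also have "\<dots> \<le> C * (d powr a + d powr (a - 1) * \<bar>u\<bar>)"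
      by (rule mult_left_mono[OF powr_split[OF d a] C])
    finally show ?thesis by (simp add: \<phi>_def algebra_simps)
  qed
  have "\<bar>Rq q f x\<bar> \<le> integral {-pi..pi} (\<lambda>u. Jk q u * \<phi> u) / (2 * pi)"
  proof (rule R_gen[OF q c])
    show "continuous_on {-pi..pi} \<phi>" unfolding \<phi>_def[abs_def] by (intro continuous_intros)
    fix u show "\<bar>f x - f (x - u)\<bar> \<le> \<phi> u" by (rule le)
  qed
  also have "integral {-pi..pi} (\<lambda>u. Jk q u * \<phi> u) =
      C * d powr a * integral {-pi..pi} (Jk q) + C * d powr (a - 1) * integral {-pi..pi} (\<lambda>u. Jk q u * \<bar>u\<bar>)"
  proof -
    have e: "(\<lambda>u. Jk q u * \<phi> u) = (\<lambda>u. C * d powr a * Jk q u + C * d powr (a - 1) * (Jk q u * \<bar>u\<bar>))"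
      by (auto simp: \<phi>_def algebra_simps)
    have i1: "(\<lambda>u. C * d powr a * Jk q u) integrable_on {-pi..pi}" by (intro int_cont continuous_intros)
    have i2: "(\<lambda>u. C * d powr (a - 1) * (Jk q u * \<bar>u\<bar>)) integrable_on {-pi..pi}" by (intro int_cont continuous_intros)
    show ?thesis unfolding e Henstock_Kurzweil_Integration.integral_add[OF i1 i2]
      by (simp only: Henstock_Kurzweil_Integration.integral_mult_right)
  qed
  also have "(C * d powr a * integral {-pi..pi} (Jk q) + C * d powr (a - 1) * integral {-pi..pi} (\<lambda>u. Jk q u * \<bar>u\<bar>)) / (2 * pi)
      = C * d powr a + C * d powr (a - 1) * (integral {-pi..pi} (\<lambda>u. Jk q u * \<bar>u\<bar>) / (2 * pi))"
    using Jk_int[OF q] by (simp add: field_simps)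
  also have "\<dots> \<le> C * d powr a + C * d powr (a - 1) * d"
    using Jk_moment[OF q] C unfolding d_def[symmetric] by (intro add_left_mono mult_left_mono) auto
  also have "C * d powr (a - 1) * d = C * d powr a"
    using powr_m1[OF d] by (simp add: mult.assoc)
  finally show ?thesis by (simp add: d_def)
qed

lemma T_deriv:
  assumes q: "q \<ge> 1" and d: "\<And>x. (f has_real_derivative f' x) (at x)"
    and c': "continuous_on UNIV f'"
  shows "(Tq q f has_real_derivative Tq q f' x) (at x)"
proof -
  have c: "continuous_on UNIV f"
    using d by (meson DERIV_continuous continuous_at_imp_continuous_on)
  have "((\<lambda>x. integral (cbox (-pi) pi) (\<lambda>u. Jk q u * f (x - u))) has_field_derivative
          integral (cbox (-pi) pi) (\<lambda>u. Jk q u * f' (x - u))) (at x within UNIV)"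
  proof (rule leibniz_rule_field_derivative[where fx = "\<lambda>x u. Jk q u * f' (x - u)"])
    fix x u
    have "((\<lambda>x. f (x - u)) has_real_derivative f' (x - u) * 1) (at x)"
      by (rule DERIV_chain2[OF d]) (auto intro!: derivative_eq_intros)
    then show "((\<lambda>x. Jk q u * f (x - u)) has_field_derivative Jk q u * f' (x - u)) (at x within UNIV)"
      by (auto intro!: DERIV_cmult)
  next
    fix x show "(\<lambda>u. Jk q u * f (x - u)) integrable_on cbox (- pi) pi"
      using T_integrable[OF c] by simp
  next
    have "continuous_on (UNIV \<times> cbox (- pi) pi) (\<lambda>p. Jk q (snd p) * f' (fst p - snd p))"
      by (intro continuous_intros cont_comp[OF c'] cont_comp[OF Jk_cont])
    then show "continuous_on (UNIV \<times> cbox (- pi) pi) (\<lambda>(x, u). Jk q u * f' (x - u))"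
      by (simp add: split_beta')
  qed auto
  then have "((\<lambda>x. integral {-pi..pi} (\<lambda>u. Jk q u * f (x - u))) has_real_derivative
          integral {-pi..pi} (\<lambda>u. Jk q u * f' (x - u))) (at x)" by simp
  then show ?thesis unfolding Tq_def[abs_def] by (rule DERIV_cdivide)
qed

lemma R_deriv:
  assumes q: "q \<ge> 1" and d: "\<And>x. (f has_real_derivative f' x) (at x)"
    and c': "continuous_on UNIV f'"
  shows "(Rq q f has_real_derivative Rq q f' x) (at x)"
  unfolding Rq_def[abs_def] by (intro DERIV_diff d T_deriv[OF q d c'])



lemma cU: "continuous_on UNIV f \<Longrightarrow> continuous_on S f"
  using continuous_on_subset by blast

lemma T_alt:
  assumes q: "q \<ge> 1" and c: "continuous_on UNIV f" and p: "periodic_2pi f"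
  shows "Tq q f x = integral {-pi..pi} (\<lambda>t. Jk q (x - t) * f t) / (2 * pi)"
proof -
  define \<psi> where "\<psi> t = Jk q (x - t) * f t" for t
  have pc: "continuous_on UNIV \<psi>" unfolding \<psi>_def[abs_def]
    by (intro continuous_intros cont_comp[OF Jk_cont] c)
  have pp: "periodic_2pi \<psi>" unfolding periodic_2pi_def \<psi>_def
  proof
    fix t
    have "Jk q (x - (t + 2 * pi)) = Jk q (x - t)" using Jk_per'[OF q, of "x - t"] by (simp add: algebra_simps)
    moreover have "f (t + 2 * pi) = f t" using p unfolding periodic_2pi_def by blast
    ultimately show "Jk q (x - (t + 2 * pi)) * f (t + 2 * pi) = Jk q (x - t) * f t" by simp
  qed
  have "integral {-pi..pi} (\<lambda>u. \<psi> (x - u)) = integral {-pi..pi} \<psi>" by (rule per_integral[OF pc pp])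
  then show ?thesis unfolding Tq_def \<psi>_def by simp
qed

lemma T_repr:
  assumes q: "q \<ge> 1" and c: "continuous_on UNIV f" and p: "periodic_2pi f" and B: "\<And>x. \<bar>f x\<bar> \<le> B"
  shows "\<exists>a b. (\<forall>x. Tq q f x = (\<Sum>n\<le>2*q. a n * cos (real n * x) + b n * sin (real n * x))) \<and>
               (\<Sum>n\<le>2*q. \<bar>a n\<bar> + \<bar>b n\<bar>) \<le> 2 * (16 * pi * real q) * B"
proof -
  obtain cc where cc: "\<forall>v. Jk q v = (\<Sum>n\<le>2*q. cc n * cos (real n * v))" "(\<Sum>n\<le>2*q. \<bar>cc n\<bar>) \<le> 16 * pi * real q"
    using Jk_cpoly[OF q] unfolding cpoly_def by blast
  define A where "A n = integral {-pi..pi} (\<lambda>t. cos (real n * t) * f t)" for n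
  define Bs where "Bs n = integral {-pi..pi} (\<lambda>t. sin (real n * t) * f t)" for n
  define a where "a n = cc n * A n / (2 * pi)" for n
  define b where "b n = cc n * Bs n / (2 * pi)" for n
  have iA: "(\<lambda>t. cos (real n * t) * f t) integrable_on {-pi..pi}" for n by (intro int_cont continuous_intros cU[OF c])
  have iB: "(\<lambda>t. sin (real n * t) * f t) integrable_on {-pi..pi}" for n by (intro int_cont continuous_intros cU[OF c])
  have rep: "Tq q f x = (\<Sum>n\<le>2*q. a n * cos (real n * x) + b n * sin (real n * x))" for x
  proof -
    have e: "(\<lambda>t. Jk q (x - t) * f t) = (\<lambda>t. \<Sum>n\<le>2*q. (cc n * cos (real n * x)) * (cos (real n * t) * f t) + (cc n * sin (real n * x)) * (sin (real n * t) * f t))"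
    proof
      fix t
      have "Jk q (x - t) * f t = (\<Sum>n\<le>2*q. cc n * cos (real n * x - real n * t) * f t)"
        using cc(1) by (simp add: sum_distrib_right right_diff_distrib)
      also have "\<dots> = (\<Sum>n\<le>2*q. (cc n * cos (real n * x)) * (cos (real n * t) * f t) + (cc n * sin (real n * x)) * (sin (real n * t) * f t))"
        by (rule sum.cong) (auto simp: cos_diff algebra_simps)
      finally show "Jk q (x - t) * f t = \<dots>" .
    qed
    have "integral {-pi..pi} (\<lambda>t. Jk q (x - t) * f t) = (\<Sum>n\<le>2*q. integral {-pi..pi} (\<lambda>t. (cc n * cos (real n * x)) * (cos (real n * t) * f t) + (cc n * sin (real n * x)) * (sin (real n * t) * f t)))"
      unfolding e by (rule Henstock_Kurzweil_Integration.integral_sum) (auto intro!: int_cont continuous_intros cU[OF c])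
    also have "\<dots> = (\<Sum>n\<le>2*q. (cc n * cos (real n * x)) * A n + (cc n * sin (real n * x)) * Bs n)"
    proof (rule sum.cong[OF refl])
      fix n
      have i1: "(\<lambda>t. (cc n * cos (real n * x)) * (cos (real n * t) * f t)) integrable_on {-pi..pi}"
        by (intro int_cont continuous_intros cU[OF c])
      have i2: "(\<lambda>t. (cc n * sin (real n * x)) * (sin (real n * t) * f t)) integrable_on {-pi..pi}"
        by (intro int_cont continuous_intros cU[OF c])
      show "integral {-pi..pi} (\<lambda>t. (cc n * cos (real n * x)) * (cos (real n * t) * f t) + (cc n * sin (real n * x)) * (sin (real n * t) * f t))
          = (cc n * cos (real n * x)) * A n + (cc n * sin (real n * x)) * Bs n"
        unfolding Henstock_Kurzweil_Integration.integral_add[OF i1 i2] A_def Bs_def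
        by (simp only: Henstock_Kurzweil_Integration.integral_mult_right)
    qed
    finally have "integral {-pi..pi} (\<lambda>t. Jk q (x - t) * f t) = (\<Sum>n\<le>2*q. (cc n * cos (real n * x)) * A n + (cc n * sin (real n * x)) * Bs n)" .
    then show ?thesis unfolding T_alt[OF q c p] a_def b_def
      by (simp add: sum_divide_distrib add_divide_distrib algebra_simps)
  qed
  have cB: "\<bar>cos y * f t\<bar> \<le> B" for y t
  proof -
    have "\<bar>cos y * f t\<bar> = \<bar>cos y\<bar> * \<bar>f t\<bar>" by (rule abs_mult)
    also have "\<dots> \<le> 1 * \<bar>f t\<bar>" by (rule mult_right_mono) auto
    finally show ?thesis using B[of t] by simp
  qed
  have sB: "\<bar>sin y * f t\<bar> \<le> B" for y t
  proof -
    have "\<bar>sin y * f t\<bar> = \<bar>sin y\<bar> * \<bar>f t\<bar>" by (rule abs_mult)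
    also have "\<dots> \<le> 1 * \<bar>f t\<bar>" by (rule mult_right_mono) auto
    finally show ?thesis using B[of t] by simp
  qed
  have bA: "\<bar>A n\<bar> \<le> 2 * pi * B" for n
  proof -
    have "norm (A n) \<le> integral {-pi..pi} (\<lambda>t. B)" unfolding A_def
      by (rule Henstock_Kurzweil_Integration.integral_norm_bound_integral[OF iA])
         (use cB in auto)
    then show ?thesis by simp
  qed
  have bB: "\<bar>Bs n\<bar> \<le> 2 * pi * B" for n
  proof -
    have "norm (Bs n) \<le> integral {-pi..pi} (\<lambda>t. B)" unfolding Bs_def
      by (rule Henstock_Kurzweil_Integration.integral_norm_bound_integral[OF iB])
         (use sB in auto)
    then show ?thesis by simp
  qed
  have "(\<Sum>n\<le>2*q. \<bar>a n\<bar> + \<bar>b n\<bar>) \<le> (\<Sum>n\<le>2*q. 2 * B * \<bar>cc n\<bar>)"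
  proof (rule sum_mono)
    fix n
    have "\<bar>a n\<bar> = \<bar>cc n\<bar> * (\<bar>A n\<bar> / (2 * pi))" by (simp add: a_def abs_mult)
    also have "\<dots> \<le> \<bar>cc n\<bar> * B" using bA[of n] by (intro mult_left_mono) (auto simp: field_simps)
    finally have 1: "\<bar>a n\<bar> \<le> \<bar>cc n\<bar> * B" .
    have "\<bar>b n\<bar> = \<bar>cc n\<bar> * (\<bar>Bs n\<bar> / (2 * pi))" by (simp add: b_def abs_mult)
    also have "\<dots> \<le> \<bar>cc n\<bar> * B" using bB[of n] by (intro mult_left_mono) (auto simp: field_simps)
    finally have 2: "\<bar>b n\<bar> \<le> \<bar>cc n\<bar> * B" .
    show "\<bar>a n\<bar> + \<bar>b n\<bar> \<le> 2 * B * \<bar>cc n\<bar>" using 1 2 by (simp add: algebra_simps)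
  qed
  also have "\<dots> = 2 * B * (\<Sum>n\<le>2*q. \<bar>cc n\<bar>)" by (simp add: sum_distrib_left)
  also have "\<dots> \<le> 2 * B * (16 * pi * real q)"
  proof -
    have "0 \<le> B" using B[of 0] by linarith
    then show ?thesis using cc(2) by (intro mult_left_mono) auto
  qed
  finally show ?thesis using rep by (intro exI[of _ a] exI[of _ b]) (auto simp: mult_ac)
qed



definition has_ext :: "real \<Rightarrow> real \<Rightarrow> (real \<Rightarrow> real) \<Rightarrow> bool" where
  "has_ext h M g \<longleftrightarrow> (\<exists>G. G holomorphic_on UNIV \<and> (\<forall>x. G (complex_of_real x) = complex_of_real (g x)) \<and>
      (\<forall>z. \<bar>Im z\<bar> \<le> h \<longrightarrow> norm (G z) \<le> M))"

lemma norm_exp_i: "norm (exp (\<i> * w)) \<le> exp \<bar>Im w\<bar>" "norm (exp (- (\<i> * w))) \<le> exp \<bar>Im w\<bar>"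
  by (simp_all add: norm_exp_eq_Re)

lemma norm_cos_le: "norm (cos (w::complex)) \<le> exp \<bar>Im w\<bar>"
proof -
  have "norm (cos w) = norm (exp (\<i> * w) + exp (- (\<i> * w))) / 2" by (simp add: cos_exp_eq norm_divide)
  also have "\<dots> \<le> (norm (exp (\<i> * w)) + norm (exp (- (\<i> * w)))) / 2"
    by (intro divide_right_mono norm_triangle_ineq) auto
  also have "\<dots> \<le> (exp \<bar>Im w\<bar> + exp \<bar>Im w\<bar>) / 2" using norm_exp_i[of w] by (intro divide_right_mono add_mono) auto
  finally show ?thesis by simp
qed

lemma norm_sin_le: "norm (sin (w::complex)) \<le> exp \<bar>Im w\<bar>"
proof -
  have "norm (sin w) = norm (exp (\<i> * w) - exp (- (\<i> * w))) / 2" by (simp add: sin_exp_eq norm_divide norm_mult)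
  also have "\<dots> \<le> (norm (exp (\<i> * w)) + norm (exp (- (\<i> * w)))) / 2"
    by (intro divide_right_mono norm_triangle_ineq4) auto
  also have "\<dots> \<le> (exp \<bar>Im w\<bar> + exp \<bar>Im w\<bar>) / 2" using norm_exp_i[of w] by (intro divide_right_mono add_mono) auto
  finally show ?thesis by simp
qed

lemma trig_ext:
  assumes h: "0 \<le> h"
  shows "has_ext h ((\<Sum>n\<le>N. \<bar>a n\<bar> + \<bar>b n\<bar>) * exp (real N * h))
           (\<lambda>x. \<Sum>n\<le>N. a n * cos (real n * x) + b n * sin (real n * x))"
  unfolding has_ext_def
proof (intro exI[of _ "\<lambda>z. \<Sum>n\<le>N. complex_of_real (a n) * cos (of_nat n * z) + complex_of_real (b n) * sin (of_nat n * z)"] conjI allI impI)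
  show "(\<lambda>z. \<Sum>n\<le>N. complex_of_real (a n) * cos (of_nat n * z) + complex_of_real (b n) * sin (of_nat n * z)) holomorphic_on UNIV"
    by (intro holomorphic_intros)
next
  fix x :: real
  have "complex_of_real (real n * x) = of_nat n * complex_of_real x" for n by simp
  then show "(\<Sum>n\<le>N. complex_of_real (a n) * cos (of_nat n * complex_of_real x) + complex_of_real (b n) * sin (of_nat n * complex_of_real x)) =
        complex_of_real (\<Sum>n\<le>N. a n * cos (real n * x) + b n * sin (real n * x))"
    by (simp add: cos_of_real[symmetric] sin_of_real[symmetric] del: cos_of_real sin_of_real)
next
  fix z :: complex assume z: "\<bar>Im z\<bar> \<le> h"
  have e: "exp \<bar>Im (of_nat n * z)\<bar> \<le> exp (real N * h)" if "n \<le> N" for n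
  proof -
    have "\<bar>Im (of_nat n * z)\<bar> = real n * \<bar>Im z\<bar>" by (simp add: abs_mult)
    also have "\<dots> \<le> real N * h" using that z h by (intro mult_mono) auto
    finally show ?thesis by simp
  qed
  have "norm (\<Sum>n\<le>N. complex_of_real (a n) * cos (of_nat n * z) + complex_of_real (b n) * sin (of_nat n * z))
      \<le> (\<Sum>n\<le>N. norm (complex_of_real (a n) * cos (of_nat n * z) + complex_of_real (b n) * sin (of_nat n * z)))"
    by (rule norm_sum)
  also have "\<dots> \<le> (\<Sum>n\<le>N. (\<bar>a n\<bar> + \<bar>b n\<bar>) * exp (real N * h))"
  proof (rule sum_mono)
    fix n assume n: "n \<in> {..N}"
    have "norm (complex_of_real (a n) * cos (of_nat n * z) + complex_of_real (b n) * sin (of_nat n * z))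
        \<le> \<bar>a n\<bar> * norm (cos (of_nat n * z)) + \<bar>b n\<bar> * norm (sin (of_nat n * z))"
      by (rule order_trans[OF norm_triangle_ineq]) (simp add: norm_mult)
    also have "\<dots> \<le> \<bar>a n\<bar> * exp (real N * h) + \<bar>b n\<bar> * exp (real N * h)"
    proof -
      have nN: "n \<le> N" using n by simp
      have c1: "norm (cos (of_nat n * z)) \<le> exp (real N * h)" by (rule order_trans[OF norm_cos_le e[OF nN]])
      have s1: "norm (sin (of_nat n * z)) \<le> exp (real N * h)" by (rule order_trans[OF norm_sin_le e[OF nN]])
      show ?thesis by (intro add_mono mult_left_mono c1 s1) auto
    qed
    finally show "norm (complex_of_real (a n) * cos (of_nat n * z) + complex_of_real (b n) * sin (of_nat n * z))
        \<le> (\<bar>a n\<bar> + \<bar>b n\<bar>) * exp (real N * h)" by (simp add: algebra_simps)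
  qed
  also have "\<dots> = (\<Sum>n\<le>N. \<bar>a n\<bar> + \<bar>b n\<bar>) * exp (real N * h)" by (simp add: sum_distrib_right)
  finally show "norm (\<Sum>n\<le>N. complex_of_real (a n) * cos (of_nat n * z) + complex_of_real (b n) * sin (of_nat n * z))
      \<le> (\<Sum>n\<le>N. \<bar>a n\<bar> + \<bar>b n\<bar>) * exp (real N * h)" .
qed

lemma ext_mono: "has_ext h M g \<Longrightarrow> M \<le> M' \<Longrightarrow> has_ext h M' g"
  unfolding has_ext_def by (meson order_trans)

lemma ext_add: "has_ext h M1 f \<Longrightarrow> has_ext h M2 g \<Longrightarrow> has_ext h (M1 + M2) (\<lambda>x. f x + g x)"
proof -
  assume "has_ext h M1 f" "has_ext h M2 g"
  then obtain F G where F: "F holomorphic_on UNIV" "\<forall>x. F (complex_of_real x) = complex_of_real (f x)" "\<forall>z. \<bar>Im z\<bar> \<le> h \<longrightarrow> norm (F z) \<le> M1"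
    and G: "G holomorphic_on UNIV" "\<forall>x. G (complex_of_real x) = complex_of_real (g x)" "\<forall>z. \<bar>Im z\<bar> \<le> h \<longrightarrow> norm (G z) \<le> M2"
    unfolding has_ext_def by blast
  show ?thesis unfolding has_ext_def
  proof (intro exI[of _ "\<lambda>z. F z + G z"] conjI allI impI)
    show "(\<lambda>z. F z + G z) holomorphic_on UNIV" using F(1) G(1) by (intro holomorphic_intros)
    fix x show "F (complex_of_real x) + G (complex_of_real x) = complex_of_real (f x + g x)" using F(2) G(2) by simp
  next
    fix z :: complex assume "\<bar>Im z\<bar> \<le> h"
    then show "norm (F z + G z) \<le> M1 + M2" using F(3) G(3) by (meson add_mono norm_triangle_ineq order_trans)
  qed
qed

lemma T_ext:
  assumes q: "q \<ge> 1" and c: "continuous_on UNIV f" and p: "periodic_2pi f" and B: "\<And>x. \<bar>f x\<bar> \<le> B" and h: "0 \<le> h"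
  shows "has_ext h (32 * pi * real q * B * exp (real (2 * q) * h)) (Tq q f)"
proof -
  obtain a b where ab: "\<forall>x. Tq q f x = (\<Sum>n\<le>2*q. a n * cos (real n * x) + b n * sin (real n * x))"
      "(\<Sum>n\<le>2*q. \<bar>a n\<bar> + \<bar>b n\<bar>) \<le> 2 * (16 * pi * real q) * B"
    using T_repr[OF q c p B] by blast
  have e: "Tq q f = (\<lambda>x. \<Sum>n\<le>2*q. a n * cos (real n * x) + b n * sin (real n * x))" using ab(1) by auto
  show ?thesis unfolding e
    by (rule ext_mono[OF trig_ext[OF h]]) (use ab(2) in \<open>auto intro!: mult_right_mono\<close>)
qed



definition good :: "(real \<Rightarrow> real) \<Rightarrow> bool" where
  "good g \<longleftrightarrow> continuous_on UNIV g \<and> periodic_2pi g"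

lemma T_cont:
  assumes q: "q \<ge> 1" and g: "good g" shows "continuous_on UNIV (Tq q g)"
proof -
  have c: "continuous_on UNIV g" and p: "periodic_2pi g" using g by (auto simp: good_def)
  obtain B where B: "\<forall>x. \<bar>g x\<bar> \<le> B" using per_bounded[OF c p] by blast
  obtain a b where ab: "\<forall>x. Tq q g x = (\<Sum>n\<le>2*q. a n * cos (real n * x) + b n * sin (real n * x))"
    using T_repr[OF q c p] B by blast
  have e: "Tq q g = (\<lambda>x. \<Sum>n\<le>2*q. a n * cos (real n * x) + b n * sin (real n * x))" using ab by auto
  show ?thesis unfolding e by (intro continuous_intros)
qed

lemma R_good: "q \<ge> 1 \<Longrightarrow> good g \<Longrightarrow> good (Rq q g)"
proof -
  assume q: "q \<ge> 1" and g: "good g"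
  have c: "continuous_on UNIV (Rq q g)" unfolding Rq_def[abs_def]
    using g T_cont[OF q g] by (intro continuous_intros) (auto simp: good_def)
  have "periodic_2pi (Tq q g)" using T_per g by (auto simp: good_def)
  then have "periodic_2pi (Rq q g)" using g unfolding good_def periodic_2pi_def Rq_def by auto
  then show ?thesis using c by (simp add: good_def)
qed

lemma Rpow_good: "q \<ge> 1 \<Longrightarrow> good g \<Longrightarrow> good ((Rq q ^^ j) g)"
  by (induction j) (auto intro: R_good)

lemma R_bound:
  assumes q: "q \<ge> 1" and g: "good g" and B: "\<And>x. \<bar>g x\<bar> \<le> B"
  shows "\<bar>Rq q g x\<bar> \<le> 2 * B"
proof -
  have "\<bar>Tq q g x\<bar> \<le> B" using T_bound[OF q _ B] g by (auto simp: good_def)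
  then show ?thesis unfolding Rq_def using B[of x] by linarith
qed

lemma Rpow_bound:
  assumes q: "q \<ge> 1" and g: "good g" and B: "\<And>x. \<bar>g x\<bar> \<le> B"
  shows "\<bar>(Rq q ^^ j) g x\<bar> \<le> 2 ^ j * B"
proof (induction j arbitrary: x)
  case 0 then show ?case using B by simp
next
  case (Suc j)
  have "\<bar>Rq q ((Rq q ^^ j) g) x\<bar> \<le> 2 * (2 ^ j * B)"
    by (rule R_bound[OF q Rpow_good[OF q g]]) (rule Suc.IH)
  then show ?case by simp
qed

lemma Rpow_deriv:
  assumes q: "q \<ge> 1" and g: "good g" and g': "good g'" and d: "\<And>x. (g has_real_derivative g' x) (at x)"
  shows "((Rq q ^^ j) g has_real_derivative (Rq q ^^ j) g' x) (at x)"
proof (induction j arbitrary: x)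
  case 0 then show ?case using d by simp
next
  case (Suc j)
  have c: "continuous_on UNIV ((Rq q ^^ j) g')" using Rpow_good[OF q g'] by (simp add: good_def)
  show ?case using R_deriv[OF q Suc.IH c] by simp
qed

lemma approx_ext:
  assumes q: "q \<ge> 1" and g: "good F" and S: "\<And>x. \<bar>F x\<bar> \<le> S" and h: "0 \<le> h"
  shows "has_ext h (32 * pi * real q * S * 2 ^ j * exp (real (2 * q) * h)) (\<lambda>x. F x - (Rq q ^^ j) F x)"
proof (induction j)
  case 0
  have S0: "0 \<le> S" using S[of 0] by linarith
  have "has_ext h 0 (\<lambda>x. F x - (Rq q ^^ 0) F x)"
    unfolding has_ext_def by (intro exI[of _ "\<lambda>z. 0"]) auto
  then show ?case by (rule ext_mono) (use S0 in simp)
next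
  case (Suc j)
  define E where "E = exp (real (2 * q) * h)"
  have gj: "good ((Rq q ^^ j) F)" by (rule Rpow_good[OF q g])
  have "has_ext h (32 * pi * real q * (2 ^ j * S) * E) (Tq q ((Rq q ^^ j) F))"
    unfolding E_def
    by (rule T_ext[OF q _ _ Rpow_bound[OF q g S] h]) (use gj in \<open>auto simp: good_def\<close>)
  from ext_add[OF Suc.IH[unfolded E_def[symmetric]] this]
  have X: "has_ext h (32 * pi * real q * S * 2 ^ j * E + 32 * pi * real q * (2 ^ j * S) * E)
      (\<lambda>x. F x - (Rq q ^^ j) F x + Tq q ((Rq q ^^ j) F) x)" .
  have e1: "(\<lambda>x. F x - (Rq q ^^ j) F x + Tq q ((Rq q ^^ j) F) x) = (\<lambda>x. F x - (Rq q ^^ Suc j) F x)"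
    by (auto simp: Rq_def)
  have e2: "32 * pi * real q * S * 2 ^ j * E + 32 * pi * real q * (2 ^ j * S) * E = 32 * pi * real q * S * 2 ^ Suc j * E"
    by (simp add: algebra_simps)
  have Y: "has_ext h (32 * pi * real q * S * 2 ^ Suc j * E) (\<lambda>x. F x - (Rq q ^^ Suc j) F x)"
    using X unfolding e1 e2 .
  show ?case using Y unfolding E_def .
qed

lemma error_chain:
  fixes fs :: "nat \<Rightarrow> real \<Rightarrow> real"
  assumes q: "q \<ge> 1" and g: "\<And>i. i \<le> k \<Longrightarrow> good (fs i)"
    and d: "\<And>i x. i < k \<Longrightarrow> (fs i has_real_derivative fs (Suc i) x) (at x)"
    and a: "0 < a" "a \<le> 1" and C: "0 \<le> C"
    and H: "\<And>x y. \<bar>fs k x - fs k y\<bar> \<le> C * \<bar>x - y\<bar> powr a"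
  shows "dd \<le> k \<Longrightarrow> \<bar>(Rq q ^^ Suc dd) (fs (k - dd)) x\<bar> \<le> (8192 / real q) ^ dd * (2 * C * (8192 / real q) powr a)"
proof (induction dd arbitrary: x)
  case 0
  have "\<bar>Rq q (fs k) x\<bar> \<le> 2 * C * (8192 / real q) powr a"
    by (rule R_hold[OF q _ a C H]) (use g[of k] in \<open>auto simp: good_def\<close>)
  then show ?case by simp
next
  case (Suc dd)
  define i where "i = k - Suc dd"
  have ik: "i < k" "Suc i = k - dd" using Suc.prems by (auto simp: i_def)
  define g0 where "g0 = (Rq q ^^ Suc dd) (fs i)"
  have der: "(g0 has_real_derivative (Rq q ^^ Suc dd) (fs (Suc i)) x) (at x)" for x
    unfolding g0_def by (rule Rpow_deriv[OF q g g d]) (use ik in auto)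
  have bnd: "\<bar>(Rq q ^^ Suc dd) (fs (Suc i)) x\<bar> \<le> (8192 / real q) ^ dd * (2 * C * (8192 / real q) powr a)" for x
    unfolding ik(2) using Suc.IH Suc.prems by simp
  have gi: "good (fs i)" using g ik by auto
  have "good g0" unfolding g0_def by (rule Rpow_good[OF q gi])
  then have cg: "continuous_on UNIV g0" by (simp add: good_def)
  have "\<bar>Rq q g0 x\<bar> \<le> (8192 / real q) ^ dd * (2 * C * (8192 / real q) powr a) * (8192 / real q)"
    by (rule R_lip[OF q cg der bnd])
  then show ?case by (simp add: g0_def i_def mult_ac)
qed



lemma strip_mem: "0 \<le> h \<Longrightarrow> complex_of_real x \<in> strip h"
  by (simp add: strip_def)

lemma cont_sup_ge:
  assumes G: "is_strip_continuation h g G" and z: "z \<in> strip h"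
  shows "norm (G z) \<le> Sup ((\<lambda>z. norm (G z)) ` strip h)"
proof (rule cSup_upper)
  show "norm (G z) \<in> (\<lambda>z. norm (G z)) ` strip h" using z by blast
  have "bounded (G ` strip h)" using G by (simp add: is_strip_continuation_def)
  then obtain B where "\<forall>y\<in>G ` strip h. norm y \<le> B" by (auto simp: bounded_iff)
  then show "bdd_above ((\<lambda>z. norm (G z)) ` strip h)" by (auto intro!: bdd_aboveI[of _ B])
qed

lemma Anorm_ge:
  assumes "in_A h g" "0 \<le> h"
  shows "\<bar>g x\<bar> \<le> A_norm h g"
  unfolding A_norm_def
proof (rule cInf_greatest)
  show "{Sup ((\<lambda>z. norm (G z)) ` strip h) |G. is_strip_continuation h g G} \<noteq> {}"
    using assms(1) by (auto simp: in_A_def)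
  fix m assume "m \<in> {Sup ((\<lambda>z. norm (G z)) ` strip h) |G. is_strip_continuation h g G}"
  then obtain G where G: "is_strip_continuation h g G" and m: "m = Sup ((\<lambda>z. norm (G z)) ` strip h)" by blast
  have "norm (G (complex_of_real x)) \<le> m" unfolding m by (rule cont_sup_ge[OF G strip_mem[OF assms(2)]])
  moreover have "G (complex_of_real x) = complex_of_real (g x)" using G by (simp add: is_strip_continuation_def)
  ultimately show "\<bar>g x\<bar> \<le> m" by simp
qed

lemma ext_cont:
  assumes "has_ext h M g" "0 \<le> h"
  shows "\<exists>G. is_strip_continuation h g G \<and> (\<forall>z\<in>strip h. norm (G z) \<le> M)"
proof -
  obtain G where G: "G holomorphic_on UNIV" "\<forall>x. G (complex_of_real x) = complex_of_real (g x)"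
      "\<forall>z. \<bar>Im z\<bar> \<le> h \<longrightarrow> norm (G z) \<le> M"
    using assms(1) unfolding has_ext_def by blast
  have "G analytic_on UNIV" using G(1) by (simp add: analytic_on_open)
  then have an: "G analytic_on strip h" by (rule analytic_on_subset) simp
  have bd: "\<forall>z\<in>strip h. norm (G z) \<le> M" using G(3) by (simp add: strip_def)
  then have "bounded (G ` strip h)" by (auto simp: bounded_iff)
  then show ?thesis using an G(2) bd by (auto simp: is_strip_continuation_def)
qed

lemma Anorm_le:
  assumes "has_ext h M g" "0 \<le> h"
  shows "A_norm h g \<le> M"
proof -
  obtain G where G: "is_strip_continuation h g G" and bd: "\<forall>z\<in>strip h. norm (G z) \<le> M"
    using ext_cont[OF assms] by blast
  have "A_norm h g \<le> Sup ((\<lambda>z. norm (G z)) ` strip h)"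
    unfolding A_norm_def
  proof (rule cInf_lower)
    show "Sup ((\<lambda>z. norm (G z)) ` strip h) \<in> {Sup ((\<lambda>z. norm (G z)) ` strip h) |G. is_strip_continuation h g G}"
      using G by blast
    show "bdd_below {Sup ((\<lambda>z. norm (G z)) ` strip h) |G. is_strip_continuation h g G}"
    proof (rule bdd_belowI[of _ 0])
      fix m assume "m \<in> {Sup ((\<lambda>z. norm (G z)) ` strip h) |G. is_strip_continuation h g G}"
      then obtain G' where G': "is_strip_continuation h g G'" and m: "m = Sup ((\<lambda>z. norm (G' z)) ` strip h)" by blast
      have "norm (G' 0) \<le> m" unfolding m by (rule cont_sup_ge[OF G']) (use assms(2) in \<open>simp add: strip_def\<close>)
      then show "0 \<le> m" by (meson norm_ge_zero order_trans)
    qed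
  qed
  also have "\<dots> \<le> M"
  proof (rule cSup_least)
    have "0 \<in> strip h" using assms(2) by (simp add: strip_def)
    then show "(\<lambda>z. norm (G z)) ` strip h \<noteq> {}" by blast
    fix m assume "m \<in> (\<lambda>z. norm (G z)) ` strip h"
    then show "m \<le> M" using bd by auto
  qed
  finally show ?thesis .
qed

lemma appr_bounds:
  assumes h: "0 \<le> h" and Fs: "in_A h Fs" and close: "\<forall>x. \<bar>F x - Fs x\<bar> \<le> \<epsilon>" and M: "has_ext h M Fs"
  shows "approachability h \<epsilon> F \<le> M" "\<bar>F x0\<bar> - \<epsilon> \<le> approachability h \<epsilon> F"
proof -
  let ?S = "{A_norm h Fs |Fs. in_A h Fs \<and> (\<forall>x. \<bar>F x - Fs x\<bar> \<le> \<epsilon>)}"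
  have mem: "A_norm h Fs \<in> ?S" using Fs close by blast
  have bdd: "bdd_below ?S"
  proof (rule bdd_belowI[of _ 0])
    fix m assume "m \<in> ?S"
    then obtain G where "in_A h G" "m = A_norm h G" by blast
    then show "0 \<le> m" using Anorm_ge[of h G 0] h by (meson abs_ge_zero order_trans)
  qed
  have "approachability h \<epsilon> F \<le> A_norm h Fs" unfolding approachability_def by (rule cInf_lower[OF mem bdd])
  also have "\<dots> \<le> M" by (rule Anorm_le[OF M h])
  finally show "approachability h \<epsilon> F \<le> M" .
  show "\<bar>F x0\<bar> - \<epsilon> \<le> approachability h \<epsilon> F" unfolding approachability_def
  proof (rule cInf_greatest)
    show "?S \<noteq> {}" using mem by blast
    fix m assume "m \<in> ?S"
    then obtain G where G: "in_A h G" "\<forall>x. \<bar>F x - G x\<bar> \<le> \<epsilon>" "m = A_norm h G" by blast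
    have "\<bar>G x0\<bar> \<le> m" using Anorm_ge[OF G(1) h] G(3) by simp
    moreover have "\<bar>F x0\<bar> - \<epsilon> \<le> \<bar>G x0\<bar>" using G(2)[rule_format, of x0] by linarith
    ultimately show "\<bar>F x0\<bar> - \<epsilon> \<le> m" by linarith
  qed
qed

lemma eventual_bound:
  fixes h K A :: real assumes h: "h > 0" and K: "K > 0" and A: "A > 0"
  shows "\<exists>X0>0. \<forall>X\<ge>X0. ln (K * (A * X + 1)) + 2 * h \<le> h * X"
proof -
  define L where "L = \<bar>ln K\<bar> + 2 * h + 2 * sqrt (A + 1)"
  have "0 \<le> sqrt (A + 1)" using A by simp
  then have L0: "0 \<le> L" using h by (simp add: L_def)
  define X0 where "X0 = max 1 ((L / h) ^ 2)"
  have "\<forall>X\<ge>X0. ln (K * (A * X + 1)) + 2 * h \<le> h * X"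
  proof (intro allI impI)
    fix X assume X: "X0 \<le> X"
    have X1: "1 \<le> X" using X by (simp add: X0_def)
    define t where "t = sqrt X"
    have t1: "1 \<le> t" using X1 by (simp add: t_def)
    have tX: "t * t = X" using X1 by (simp add: t_def)
    have tL: "L / h \<le> t"
    proof -
      have "(L / h) ^ 2 \<le> X" using X by (simp add: X0_def)
      then have "sqrt ((L / h) ^ 2) \<le> t" unfolding t_def by (rule real_sqrt_le_mono)
      then show ?thesis using L0 h by simp
    qed
    have pos: "0 < A * X + 1" using A X1 by (simp add: add_pos_nonneg)
    have "ln (A * X + 1) = 2 * ln (sqrt (A * X + 1))" using pos by (simp add: ln_sqrt)
    also have "\<dots> \<le> 2 * sqrt (A * X + 1)" using pos ln_bound[of "sqrt (A * X + 1)"] by simp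
    also have "sqrt (A * X + 1) \<le> sqrt ((A + 1) * X)"
    proof (rule real_sqrt_le_mono)
      show "A * X + 1 \<le> (A + 1) * X" using X1 by (simp add: distrib_right)
    qed
    also have "\<dots> = sqrt (A + 1) * t" by (simp add: t_def real_sqrt_mult)
    finally have l1: "ln (A * X + 1) \<le> 2 * (sqrt (A + 1) * t)" by simp
    have "ln (K * (A * X + 1)) + 2 * h = ln K + ln (A * X + 1) + 2 * h" using K pos by (simp add: ln_mult)
    also have "\<dots> \<le> \<bar>ln K\<bar> * t + 2 * h * t + 2 * sqrt (A + 1) * t"
    proof -
      have "\<bar>ln K\<bar> * 1 \<le> \<bar>ln K\<bar> * t" using t1 by (rule mult_left_mono) simp
      then have "ln K \<le> \<bar>ln K\<bar> * t" by linarith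
      moreover have "2 * h * 1 \<le> 2 * h * t" using t1 h by (intro mult_left_mono) auto
      ultimately show ?thesis using l1 by simp
    qed
    also have "\<dots> = L * t" by (simp add: L_def algebra_simps)
    also have "\<dots> \<le> (h * t) * t"
    proof (rule mult_right_mono)
      show "L \<le> h * t" using tL h by (simp add: divide_le_eq mult.commute)
    qed (use t1 in simp)
    also have "\<dots> = h * X" using tX by (simp add: mult.assoc)
    finally show "ln (K * (A * X + 1)) + 2 * h \<le> h * X" .
  qed
  moreover have "X0 > 0" by (simp add: X0_def)
  ultimately show ?thesis by blast
qed



lemma deriv_per: "periodic_2pi f \<Longrightarrow> periodic_2pi (deriv f)"
proof -
  assume p: "periodic_2pi f"
  have fe: "(\<lambda>t. f (t + 2 * pi)) = f" using p unfolding periodic_2pi_def by auto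
  have "deriv f (x + 2 * pi) = deriv f x" for x
  proof -
    have "(\<lambda>D. (f has_field_derivative D) (at (x + 2 * pi))) = (\<lambda>D. (f has_field_derivative D) (at x))"
      using DERIV_shift[of f _ x "2 * pi"] fe by auto
    then show ?thesis unfolding deriv_def by simp
  qed
  then show ?thesis unfolding periodic_2pi_def by blast
qed

lemma holder_cont:
  assumes a: "0 < a" and H: "\<And>x y. \<bar>f x - f y\<bar> \<le> C * \<bar>x - y\<bar> powr a"
  shows "continuous_on UNIV (f :: real \<Rightarrow> real)"
proof -
  have "isCont f x" for x
  proof -
    have t: "((\<lambda>y. \<bar>y - x\<bar> powr a) \<longlongrightarrow> 0) (at x)"
      by (rule tendsto_zero_powrI) (auto intro!: tendsto_eq_intros a)
    have "((\<lambda>y. f y - f x) \<longlongrightarrow> 0) (at x)"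
    proof (rule Lim_null_comparison)
      show "\<forall>\<^sub>F y in at x. norm (f y - f x) \<le> C * \<bar>y - x\<bar> powr a" using H by auto
      show "((\<lambda>y. C * \<bar>y - x\<bar> powr a) \<longlongrightarrow> 0) (at x)" using tendsto_mult_right_zero[OF t] by simp
    qed
    then have "(f \<longlongrightarrow> f x) (at x)" by (rule LIM_zero_cancel)
    then show ?thesis by (simp add: isCont_def)
  qed
  then show ?thesis by (simp add: continuous_at_imp_continuous_on)
qed

lemma ln2_ge: "1/2 \<le> ln (2::real)"
proof -
  have "exp (1/2::real) * exp (1/2) = exp 1" by (simp flip: exp_add)
  also have "\<dots> \<le> 3" by (rule exp_le)
  finally have e: "exp (1/2::real) * exp (1/2) \<le> 3" .
  have "exp (1/2::real) \<le> 2"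
  proof (rule ccontr)
    assume "\<not> exp (1/2::real) \<le> 2"
    then have "2 * 2 < exp (1/2::real) * exp (1/2)" by (intro mult_strict_mono) auto
    then show False using e by simp
  qed
  then show ?thesis using ln_ge_iff[of 2 "1/2"] by linarith
qed



lemma main_eps:
  fixes fs :: "nat \<Rightarrow> real \<Rightarrow> real"
  assumes h: "0 < h" and a: "0 < \<alpha>" "\<alpha> \<le> 1" and c: "0 < c"
    and g: "\<And>i. i \<le> k \<Longrightarrow> good (fs i)"
    and d: "\<And>i x. i < k \<Longrightarrow> (fs i has_real_derivative fs (Suc i) x) (at x)"
    and H: "\<And>x y. \<bar>fs k x - fs k y\<bar> \<le> c * \<bar>x - y\<bar> powr \<alpha>"
    and S: "\<And>x. \<bar>fs 0 x\<bar> \<le> S" and S1: "1 \<le> S"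
    and e: "0 < \<epsilon>" "\<epsilon> < \<bar>fs 0 x0\<bar> / 2"
    and X0: "\<And>X. X \<ge> X0 \<Longrightarrow> ln (32 * pi * S * 2 ^ Suc k * (8192 * X + 1)) + 2 * h \<le> h * X"
    and Xge: "X0 \<le> (12 * c / \<epsilon>) powr (1 / (real k + \<alpha>))"
  shows "log 2 (approachability h \<epsilon> (fs 0)) \<le> (4 * 8192 + 2) * h * (12 * c / \<epsilon>) powr (1 / (real k + \<alpha>))"
proof -
  define s where "s = real k + \<alpha>"
  have s0: "0 < s" using a by (simp add: s_def add_nonneg_pos)
  define X where "X = (12 * c / \<epsilon>) powr (1 / s)"
  have y0: "0 < 12 * c / \<epsilon>" using c e by simp
  have X0': "0 < X" using y0 c e by (simp add: X_def)
  have Xs: "X powr s = 12 * c / \<epsilon>"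
    unfolding X_def powr_powr using s0 y0 c e by simp
  define q where "q = nat \<lceil>8192 * X\<rceil>"
  have cq: "0 < \<lceil>8192 * X\<rceil>" using X0' by simp
  have rq: "real q = real_of_int \<lceil>8192 * X\<rceil>" using cq by (simp add: q_def)
  have qge: "8192 * X \<le> real q" unfolding rq by (rule le_of_int_ceiling)
  have qle: "real q \<le> 8192 * X + 1" unfolding rq by (simp add: of_int_ceiling_le_add_one)
  have q1: "q \<ge> 1" using cq unfolding q_def by linarith
  have rq1: "1 \<le> real q" using q1 by simp
  define \<delta> where "\<delta> = 8192 / real q"
  have d0: "0 < \<delta>" using q1 by (simp add: \<delta>_def)
  have dX: "\<delta> \<le> 1 / X"
  proof -
    have "\<delta> \<le> 8192 / (8192 * X)" unfolding \<delta>_def using qge X0' by (intro divide_left_mono) auto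
    then show ?thesis using X0' by simp
  qed
  have gk: "good (fs 0)" using g by simp
  have err: "\<bar>(Rq q ^^ Suc k) (fs 0) x\<bar> \<le> \<epsilon>" for x
  proof -
    have "\<bar>(Rq q ^^ Suc k) (fs (k - k)) x\<bar> \<le> (8192 / real q) ^ k * (2 * c * (8192 / real q) powr \<alpha>)"
      by (rule error_chain[OF q1 g d a _ H]) (use c in auto)
    then have "\<bar>(Rq q ^^ Suc k) (fs 0) x\<bar> \<le> \<delta> ^ k * (2 * c * \<delta> powr \<alpha>)" by (simp add: \<delta>_def)
    also have "\<delta> ^ k * (2 * c * \<delta> powr \<alpha>) = 2 * c * \<delta> powr s"
      using d0 by (simp add: s_def powr_add powr_realpow[symmetric])
    also have "\<dots> \<le> 2 * c * (1 / X) powr s"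
      using dX d0 s0 c by (intro mult_left_mono powr_mono2) auto
    also have "(1 / X) powr s = \<epsilon> / (12 * c)" using X0' Xs by (simp add: powr_divide)
    also have "2 * c * (\<epsilon> / (12 * c)) \<le> \<epsilon>" using c e by (simp add: field_simps)
    finally show ?thesis .
  qed
  define Fs where "Fs x = fs 0 x - (Rq q ^^ Suc k) (fs 0) x" for x
  have close: "\<forall>x. \<bar>fs 0 x - Fs x\<bar> \<le> \<epsilon>" using err by (simp add: Fs_def)
  define K0 where "K0 = 32 * pi * S * 2 ^ Suc k"
  have K0: "0 < K0" using S1 by (simp add: K0_def)
  define M where "M = K0 * real q * exp (real (2 * q) * h)"
  have ext: "has_ext h M Fs"
  proof -
    have "has_ext h (32 * pi * real q * S * 2 ^ Suc k * exp (real (2 * q) * h)) (\<lambda>x. fs 0 x - (Rq q ^^ Suc k) (fs 0) x)"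
      by (rule approx_ext[OF q1 gk S]) (use h in simp)
    moreover have "32 * pi * real q * S * 2 ^ Suc k * exp (real (2 * q) * h) = M"
      by (simp add: M_def K0_def mult_ac)
    ultimately show ?thesis by (simp add: Fs_def[abs_def])
  qed
  have inA: "in_A h Fs"
  proof -
    have "good ((Rq q ^^ Suc k) (fs 0))" by (rule Rpow_good[OF q1 gk])
    then have "periodic_2pi Fs" using gk unfolding good_def periodic_2pi_def Fs_def by auto
    moreover obtain G where "is_strip_continuation h Fs G" using ext_cont[OF ext] h by auto
    ultimately show ?thesis unfolding in_A_def by blast
  qed
  have h0: "0 \<le> h" using h by simp
  have up: "approachability h \<epsilon> (fs 0) \<le> M" by (rule appr_bounds(1)[OF h0 inA close ext])
  have lo: "\<bar>fs 0 x0\<bar> - \<epsilon> \<le> approachability h \<epsilon> (fs 0)" by (rule appr_bounds(2)[OF h0 inA close ext])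
  have apos: "0 < approachability h \<epsilon> (fs 0)" using lo e by linarith
  have "log 2 (approachability h \<epsilon> (fs 0)) \<le> log 2 M" by (rule log_mono) (use apos up in auto)
  also have "log 2 M = ln M / ln 2" by (simp add: log_def)
  also have "ln M \<le> 16385 * h * X"
  proof -
    have Kq: "0 < K0 * real q" using K0 q1 by simp
    have "ln M = ln (K0 * real q) + ln (exp (real (2 * q) * h))" unfolding M_def by (rule ln_mult_pos[OF Kq exp_gt_zero])
    then have "ln M = ln (K0 * real q) + real (2 * q) * h" by (simp only: ln_exp)
    also have "ln (K0 * real q) \<le> ln (K0 * (8192 * X + 1))"
    proof -
      have p2: "0 < K0 * (8192 * X + 1)" using K0 X0' by (simp add: add_pos_pos)
      have "K0 * real q \<le> K0 * (8192 * X + 1)" using qle K0 by (intro mult_left_mono) auto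
      then show ?thesis using ln_le_cancel_iff[OF Kq p2] by simp
    qed
    also have "real (2 * q) * h \<le> 2 * (8192 * X + 1) * h" using qle h by simp
    finally have "ln M \<le> (ln (K0 * (8192 * X + 1)) + 2 * h) + 16384 * h * X" by (simp add: algebra_simps)
    also have "\<dots> \<le> h * X + 16384 * h * X" using X0[of X] Xge unfolding K0_def X_def s_def by simp
    finally show ?thesis by (simp add: algebra_simps)
  qed
  then have "ln M / ln 2 \<le> 16385 * h * X / ln 2" by (rule divide_right_mono) simp
  also have "\<dots> \<le> 16385 * h * X / (1/2)"
    using ln2_ge h X0' by (intro divide_left_mono) auto
  also have "\<dots> = (4 * 8192 + 2) * h * X" by simp
  finally show ?thesis unfolding X_def s_def .
qed



theorem lemma3:
  shows "\<exists>C::real. \<forall>(h::real) (k::nat) (\<alpha>::real) (c::real) (F::real \<Rightarrow> real).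
     h > 0 \<and> 0 < \<alpha> \<and> \<alpha> \<le> 1 \<and> c > 0 \<and> F \<noteq> (\<lambda>_. 0) \<and> periodic_2pi F \<and>
     (\<forall>j<k. \<forall>x. (deriv ^^ j) F differentiable (at x)) \<and>
     (\<forall>x y. \<bar>(deriv ^^ k) F x - (deriv ^^ k) F y\<bar> \<le> c * \<bar>x - y\<bar> powr \<alpha>)
     \<longrightarrow> (\<forall>\<^sub>F \<epsilon> in at_right 0.
            log 2 (approachability h \<epsilon> F) \<le> C * h * (12 * c / \<epsilon>) powr (1 / (real k + \<alpha>)))"
proof (intro exI[of _ "4 * 8192 + 2"] allI impI)
  fix h :: real and k :: nat and \<alpha> c :: real and F :: "real \<Rightarrow> real"
  assume A: "h > 0 \<and> 0 < \<alpha> \<and> \<alpha> \<le> 1 \<and> c > 0 \<and> F \<noteq> (\<lambda>_. 0) \<and> periodic_2pi F \<and>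
     (\<forall>j<k. \<forall>x. (deriv ^^ j) F differentiable (at x)) \<and>
     (\<forall>x y. \<bar>(deriv ^^ k) F x - (deriv ^^ k) F y\<bar> \<le> c * \<bar>x - y\<bar> powr \<alpha>)"
  then have h: "h > 0" and a: "0 < \<alpha>" "\<alpha> \<le> 1" and c: "c > 0" and Fnz: "F \<noteq> (\<lambda>_. 0)"
    and per0: "periodic_2pi F" and dif: "\<And>j x. j < k \<Longrightarrow> (deriv ^^ j) F differentiable (at x)"
    and hold: "\<And>x y. \<bar>(deriv ^^ k) F x - (deriv ^^ k) F y\<bar> \<le> c * \<bar>x - y\<bar> powr \<alpha>"
    by auto
  define fs where "fs i = (deriv ^^ i) F" for i
  have fs0: "fs 0 = F" by (simp add: fs_def)
  have fsS: "fs (Suc i) = deriv (fs i)" for i by (simp add: fs_def)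
  have d: "(fs i has_real_derivative fs (Suc i) x) (at x)" if "i < k" for i x
  proof -
    have "fs i differentiable (at x)" using dif[OF that] by (simp add: fs_def)
    then have "(fs i has_real_derivative deriv (fs i) x) (at x)" by (simp add: DERIV_deriv_iff_real_differentiable)
    then show ?thesis by (simp add: fsS)
  qed
  have per: "periodic_2pi (fs i)" for i
    by (induction i) (auto simp: fsS fs0 per0 intro: deriv_per)
  have H: "\<bar>fs k x - fs k y\<bar> \<le> c * \<bar>x - y\<bar> powr \<alpha>" for x y using hold by (simp add: fs_def)
  have g: "good (fs i)" if "i \<le> k" for i
  proof (cases "i < k")
    case True
    have "isCont (fs i) x" for x using d[OF True] by (rule DERIV_isCont)
    then have "continuous_on UNIV (fs i)" by (simp add: continuous_at_imp_continuous_on)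
    then show ?thesis using per by (simp add: good_def)
  next
    case False
    then have "i = k" using that by simp
    moreover have "continuous_on UNIV (fs k)" by (rule holder_cont[OF a(1) H])
    ultimately show ?thesis using per by (simp add: good_def)
  qed
  obtain S0 where S0: "\<forall>x. \<bar>F x\<bar> \<le> S0" using per_bounded[of F] g[of 0] per0 by (auto simp: good_def fs0)
  define S where "S = S0 + 1"
  have S: "\<bar>fs 0 x\<bar> \<le> S" for x
  proof -
    have "\<bar>F x\<bar> \<le> S0" using S0 by blast
    then show ?thesis unfolding fs0 S_def by linarith
  qed
  have S1: "1 \<le> S"
  proof -
    have "\<bar>F 0\<bar> \<le> S0" using S0 by blast
    then show ?thesis unfolding S_def using abs_ge_zero[of "F 0"] by linarith
  qed
  obtain x0 where x0: "F x0 \<noteq> 0" using Fnz by auto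
  define K0 where "K0 = 32 * pi * S * 2 ^ Suc k"
  have K0: "0 < K0" using S1 by (simp add: K0_def)
  obtain X0 where X0: "X0 > 0" and X0P: "\<forall>X\<ge>X0. ln (K0 * (8192 * X + 1)) + 2 * h \<le> h * X"
    using eventual_bound[OF h K0, of 8192] by auto
  define s where "s = real k + \<alpha>"
  have s0: "0 < s" using a by (simp add: s_def add_nonneg_pos)
  have X0s: "0 < X0 powr s" using X0 by simp
  define \<epsilon>0 where "\<epsilon>0 = min (\<bar>F x0\<bar> / 2) (12 * c / X0 powr s)"
  have e0: "0 < \<epsilon>0" using x0 c X0s by (simp add: \<epsilon>0_def)
  show "\<forall>\<^sub>F \<epsilon> in at_right 0. log 2 (approachability h \<epsilon> F) \<le> (4 * 8192 + 2) * h * (12 * c / \<epsilon>) powr (1 / (real k + \<alpha>))"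
  proof (rule eventually_at_rightI[OF _ e0])
    fix \<epsilon> :: real assume "\<epsilon> \<in> {0<..<\<epsilon>0}"
    then have e: "0 < \<epsilon>" "\<epsilon> < \<bar>F x0\<bar> / 2" "\<epsilon> < 12 * c / X0 powr s" by (auto simp: \<epsilon>0_def)
    have Xge: "X0 \<le> (12 * c / \<epsilon>) powr (1 / (real k + \<alpha>))"
    proof -
      have "\<epsilon> * X0 powr s < 12 * c" using e(3) X0s by (simp add: less_divide_eq)
      then have lt: "X0 powr s < 12 * c / \<epsilon>" using e(1) by (simp add: less_divide_eq mult.commute)
      have "(X0 powr s) powr (1 / s) \<le> (12 * c / \<epsilon>) powr (1 / s)"
        using lt s0 X0s by (intro powr_mono2) auto
      moreover have "(X0 powr s) powr (1 / s) = X0" using s0 X0 by (simp add: powr_powr)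
      ultimately show ?thesis by (simp add: s_def)
    qed
    have "log 2 (approachability h \<epsilon> (fs 0)) \<le> (4 * 8192 + 2) * h * (12 * c / \<epsilon>) powr (1 / (real k + \<alpha>))"
    proof (rule main_eps[OF h a c g d H S S1 e(1) _ _ Xge])
      show "\<epsilon> < \<bar>fs 0 x0\<bar> / 2" using e(2) by (simp add: fs0)
      fix X :: real assume "X0 \<le> X"
      then have "ln (K0 * (8192 * X + 1)) + 2 * h \<le> h * X" using X0P by blast
      then show "ln (32 * pi * S * 2 ^ Suc k * (8192 * X + 1)) + 2 * h \<le> h * X"
        unfolding K0_def .
    qed
    then show "log 2 (approachability h \<epsilon> F) \<le> (4 * 8192 + 2) * h * (12 * c / \<epsilon>) powr (1 / (real k + \<alpha>))"
      unfolding fs0 .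
  qed
qed


end
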